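(* Let $R\subset\mathbb C_p$ be the ring of integers of a finite extension of $\mathbb Q_p$ with ramification index $e$ and uniformizer $\pi$, containing all $p$-power roots of unity needed below (or work after extending scalars). Let $(G_n)_{n\ge1}$ be finite abelian groups, $\nu\in\Lambda^{\mathrm{hor}}_R=R[[\prod_n G_n]]$, $m\ge1$, and surjections $\rho_n:G_n\to\mathbb Z/p^m$; let $\rho(\nu)\in\Lambda^{\mathrm{dig}}_{R,m}$ be the pushforward of $\nu$ under $\prod_n\rho_n:\prod_nG_n\to(\mathbb Z/p^m)^{\mathbb N}$. Let $f_{\nu,m}(T)\in R[[T]]$ be the Amice transform of $d_{\infty,m}(\rho(\nu))$ and let $\mu\in\mathbb Z_{\ge0}\cup\{\infty\}$, $\lambda\in\mathbb Z_{\ge0}$ be its Weierstrass $\mu$- and $\lambda$-invariants. Fix compatible primitive $p$-power roots of unity $\zeta_{p^k}$ ($\zeta_{p^{k+1}}^p=\zeta_{p^k}$) and let $\chi_0$ be the character of $\mathbb Z/p^m$ with $\chi_0(1)=\zeta_{p^m}$. For $n\ge1$ put $$S_n=\frac{1}{p^{mn}}\sum_{(\chi_i)\in\widehat{\mathbb Z/p^m}^{\,n}}\left(\prod_{i=1}^nu_{m,n-i}(\chi_i)\right)\rho(\nu)(\chi_1,\ldots,\chi_n,\chi_0),\qquad u_{m,n-i}(\chi_i)=\frac{\zeta_{p^{m(n-i+2)}}-1}{\zeta_{p^{m(n-i+2)}}\overline{\chi_i(1)}-1}.$$ If $\rho(\nu)\ne0$ then $\mu<\infty$ and for all sufficiently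 large $n$, $$v_p(S_n)=\frac{\mu}{e}-\frac{1}{p^m-p^{m-1}}+\frac{\lambda+1}{p^{m(n+1)}-p^{m(n+1)-1}}.$$ If $\rho(\nu)=0$ then $\mu=\infty$ and $S_n=0$ for all $n$.
   Context: For finite abelian groups $G_n$, the horizontal Iwasawa algebra is $\Lambda^{\mathrm{hor}}_R=R[[\prod_nG_n]]=\varprojlim_{A\subset\mathbb N\text{ finite}}R[\prod_{n\in A}G_n]$. The $p^m$-adic digit algebra is $\Lambda^{\mathrm{dig}}_{R,m}=\varprojlim_nR[(\mathbb Z/p^m)^n]$ (projections forgetting the last factor), i.e. $R$-valued measures on $(\mathbb Z/p^m)^{\mathbb N}$; for characters $\chi_j$ of $\mathbb Z/p^m$, $\rho(\nu)(\chi_1,\ldots,\chi_k)=\int\prod_{j\le k}\chi_j(a_j)\,d\rho(\nu)(a)$. The $p^m$-adic digit map $d_{\infty,m}:(\mathbb Z/p^m)^{\mathbb N}\to\mathbb Z_p$, $(a_i)\mapsto\sum_{i\ge1}\tilde a_ip^{m(i-1)}$ ($\tilde a_i\in\{0,\dots,p^m-1\}$), is a homeomorphism and induces by pushforward an $R$-module isomorphism $\Lambda^{\mathrm{dig}}_{R,m}\to R[[\mathbb Z_p]]$. The Amice transform sends $\mu\in R[[\mathbb Z_p]]$ to $\sum_{k\ge0}\mu(\binom{x}{k})T^k\in R[[T]]$. Weierstrass invariants: a nonzero $f\in R[[T]]$ factors uniquely as $\pi^{\mu(f)}g(T)u(T)$ with $u\in R[[T]]^\times$, $g$ monic of degree $\lambda(f)$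 with non-leading coefficients in $(\pi)$; for $f=0$ set $\mu=\infty,\lambda=0$. $v_p$ is normalized by $v_p(p)=1$, and $\overline{\chi}=\chi^{-1}$. *)

theory Defs
  imports "HOL-Algebra.Elementary_Groups" "HOL-Computational_Algebra.Polynomial_FPS"
    "HOL-Library.Extended_Real" "HOL-Library.Extended_Nat"
begin

definition valuation :: "('a::field \<Rightarrow> ereal) \<Rightarrow> bool" where
  "valuation v \<longleftrightarrow>
     (\<forall>x. v x = \<infinity> \<longleftrightarrow> x = 0) \<and> (\<forall>x. v x \<noteq> -\<infinity>) \<and>
     (\<forall>x y. v (x * y) = v x + v y) \<and>
     (\<forall>x y. min (v x) (v y) \<le> v (x + y))"

definition vconv :: "('a::field \<Rightarrow> ereal) \<Rightarrow> (nat \<Rightarrow> 'a) \<Rightarrow> 'a \<Rightarrow> bool" where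
  "vconv v X c \<longleftrightarrow> (\<forall>M::real. \<exists>N. \<forall>n\<ge>N. ereal M \<le> v (X n - c))"

definition vcomplete :: "('a::field \<Rightarrow> ereal) \<Rightarrow> bool" where
  "vcomplete v \<longleftrightarrow> (\<forall>X. (\<forall>M::real. \<exists>N. \<forall>n\<ge>N. \<forall>k\<ge>N. ereal M \<le> v (X n - X k))
                        \<longrightarrow> (\<exists>c. vconv v X c))"

definition alg_closed_field :: "'a::field itself \<Rightarrow> bool" where
  "alg_closed_field _ \<longleftrightarrow> (\<forall>q :: 'a poly. 0 < degree q \<longrightarrow> (\<exists>x. poly q x = 0))"

definition Cp_like :: "nat \<Rightarrow> ('a::field_char_0 \<Rightarrow> ereal) \<Rightarrow> bool" where
  "Cp_like p v \<longleftrightarrow> prime p \<and> valuation v \<and> v (of_nat p) = 1 \<and> vcomplete v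
                   \<and> alg_closed_field TYPE('a)"

definition Qp_in :: "('a::field_char_0 \<Rightarrow> ereal) \<Rightarrow> 'a set" where
  "Qp_in v = {x. \<exists>X. (\<forall>n. X n \<in> \<rat>) \<and> vconv v X x}"

definition subfield_of :: "'a::field set \<Rightarrow> bool" where
  "subfield_of K \<longleftrightarrow> 0 \<in> K \<and> 1 \<in> K \<and> (\<forall>x\<in>K. \<forall>y\<in>K. x + y \<in> K \<and> x * y \<in> K)
     \<and> (\<forall>x\<in>K. - x \<in> K \<and> inverse x \<in> K)"

definition finite_ext_Qp :: "('a::field_char_0 \<Rightarrow> ereal) \<Rightarrow> 'a set \<Rightarrow> bool" where
  "finite_ext_Qp v K \<longleftrightarrow> subfield_of K \<and> Qp_in v \<subseteq> K \<and>
     (\<exists>B. finite B \<and> B \<subseteq> K \<and>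
          (\<forall>x\<in>K. \<exists>c. (\<forall>b\<in>B. c b \<in> Qp_in v) \<and> x = (\<Sum>b\<in>B. c b * b)))"

definition int_ring :: "('a::field \<Rightarrow> ereal) \<Rightarrow> 'a set \<Rightarrow> 'a set" where
  "int_ring v K = {x\<in>K. 0 \<le> v x}"

text \<open>pi is a uniformizer of the ring of integers of K, and e is the ramification index
  (p = pi^e * unit, i.e. e * v(pi) = v(p) = 1).\<close>
definition uniformizer :: "('a::field \<Rightarrow> ereal) \<Rightarrow> 'a set \<Rightarrow> 'a \<Rightarrow> bool" where
  "uniformizer v K \<pi> \<longleftrightarrow> \<pi> \<in> K \<and> 0 < v \<pi> \<and> (\<forall>x\<in>K. 0 < v x \<longrightarrow> v \<pi> \<le> v x)"

definition ram_index :: "('a::field \<Rightarrow> ereal) \<Rightarrow> 'a \<Rightarrow> nat \<Rightarrow> bool" where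
  "ram_index v \<pi> e \<longleftrightarrow> 0 < e \<and> v \<pi> = ereal (1 / real e)"

text \<open>Compatible primitive p-power roots of unity zeta k = zeta_{p^k}.\<close>
definition compatible_roots :: "nat \<Rightarrow> (nat \<Rightarrow> 'a::field) \<Rightarrow> bool" where
  "compatible_roots p \<zeta> \<longleftrightarrow>
     (\<forall>k. \<zeta> k ^ (p ^ k) = 1 \<and> (\<forall>j. 0 < j \<and> j < p ^ k \<longrightarrow> \<zeta> k ^ j \<noteq> 1)) \<and>
     (\<forall>k. \<zeta> (Suc k) ^ p = \<zeta> k)"

text \<open>An element of the horizontal Iwasawa algebra R[[prod_{n>=1} G_n]], as a compatible
  family of R-valued functions on prod_{n in A} G_n, A finite subset of {1,2,...}.\<close>
definition hor_elem ::
  "'a set \<Rightarrow> (nat \<Rightarrow> ('g, 'b) monoid_scheme) \<Rightarrow> (nat set \<Rightarrow> (nat \<Rightarrow> 'g) \<Rightarrow> 'a::comm_ring_1) \<Rightarrow> bool"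
  where
  "hor_elem R G \<nu> \<longleftrightarrow>
     (\<forall>A. finite A \<and> A \<subseteq> {1..} \<longrightarrow> (\<forall>x\<in>PiE A (\<lambda>n. carrier (G n)). \<nu> A x \<in> R)) \<and>
     (\<forall>A B. finite B \<and> A \<subseteq> B \<and> B \<subseteq> {1..} \<longrightarrow>
        (\<forall>x\<in>PiE A (\<lambda>n. carrier (G n)).
           \<nu> A x = (\<Sum>y\<in>{y\<in>PiE B (\<lambda>n. carrier (G n)). restrict y A = x}. \<nu> B y)))"

text \<open>Digit tuples: elements of (Z/p^m)^n, indexed by {1..n}, represented by {0..<p^m}.\<close>
definition digits :: "nat \<Rightarrow> nat \<Rightarrow> nat \<Rightarrow> (nat \<Rightarrow> int) set" where
  "digits p m n = PiE {1..n} (\<lambda>_. {0..<int (p ^ m)})"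

text \<open>Pushforward rho(nu) in Lambda^dig_{R,m}: its level-n component on (Z/p^m)^n.\<close>
definition push_dig ::
  "(nat \<Rightarrow> ('g, 'b) monoid_scheme) \<Rightarrow> (nat \<Rightarrow> 'g \<Rightarrow> int) \<Rightarrow> (nat set \<Rightarrow> (nat \<Rightarrow> 'g) \<Rightarrow> 'a::comm_ring_1)
    \<Rightarrow> nat \<Rightarrow> (nat \<Rightarrow> int) \<Rightarrow> 'a" where
  "push_dig G \<rho> \<nu> n a =
     (\<Sum>g\<in>{g\<in>PiE {1..n} (\<lambda>i. carrier (G i)). \<forall>i\<in>{1..n}. \<rho> i (g i) = a i}. \<nu> {1..n} g)"

text \<open>Characters of Z/N with values in the field, as N-periodic homomorphisms Z -> 'a^*.\<close>
definition chars :: "nat \<Rightarrow> (int \<Rightarrow> 'a::field) set" where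
  "chars N = {\<chi>. \<chi> 0 = 1 \<and> (\<forall>a b. \<chi> (a + b) = \<chi> a * \<chi> b) \<and> (\<forall>a. \<chi> (a + int N) = \<chi> a)}"

text \<open>rho(nu)(chi_1,...,chi_k) = integral of prod_{j<=k} chi_j(a_j) d rho(nu)(a).\<close>
definition dig_char_int ::
  "nat \<Rightarrow> nat \<Rightarrow> (nat \<Rightarrow> (nat \<Rightarrow> int) \<Rightarrow> 'a::field) \<Rightarrow> nat \<Rightarrow> (nat \<Rightarrow> int \<Rightarrow> 'a) \<Rightarrow> 'a" where
  "dig_char_int p m \<mu> k \<chi> = (\<Sum>a\<in>digits p m k. (\<Prod>j=1..k. \<chi> j (a j)) * \<mu> k a)"

definition digit_val :: "nat \<Rightarrow> nat \<Rightarrow> nat \<Rightarrow> (nat \<Rightarrow> int) \<Rightarrow> nat" where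
  "digit_val p m n a = (\<Sum>i=1..n. nat (a i) * p ^ (m * (i - 1)))"

text \<open>Pushforward d_{infinity,m}(rho(nu)) in R[[Z_p]], level N component on Z/p^N
  (represented by {0..<p^N}): the mass of x + p^N Z_p.  The first ceil(N/m) digits determine
  the image modulo p^N.\<close>
definition push_Zp :: "nat \<Rightarrow> nat \<Rightarrow> (nat \<Rightarrow> (nat \<Rightarrow> int) \<Rightarrow> 'a::comm_ring_1) \<Rightarrow> nat \<Rightarrow> nat \<Rightarrow> 'a" where
  "push_Zp p m \<mu> N x =
     (let n = (N + m - 1) div m in
      (\<Sum>a\<in>{a\<in>digits p m n. digit_val p m n a mod p ^ N = x}. \<mu> n a))"

definition Zp_integral ::
  "nat \<Rightarrow> ('a::field \<Rightarrow> ereal) \<Rightarrow> (nat \<Rightarrow> nat \<Rightarrow> 'a) \<Rightarrow> (nat \<Rightarrow> 'a) \<Rightarrow> 'a" where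
  "Zp_integral p v \<mu> f = (THE c. vconv v (\<lambda>N. \<Sum>x<p ^ N. f x * \<mu> N x) c)"

definition amice :: "nat \<Rightarrow> ('a::field \<Rightarrow> ereal) \<Rightarrow> (nat \<Rightarrow> nat \<Rightarrow> 'a) \<Rightarrow> 'a fps" where
  "amice p v \<mu> = Abs_fps (\<lambda>k. Zp_integral p v \<mu> (\<lambda>x. of_nat (x choose k)))"

definition in_RT :: "'a set \<Rightarrow> 'a::comm_ring_1 fps \<Rightarrow> bool" where
  "in_RT R f \<longleftrightarrow> (\<forall>k. fps_nth f k \<in> R)"

definition weierstrass_fact :: "'a set \<Rightarrow> 'a::comm_ring_1 \<Rightarrow> 'a fps \<Rightarrow> nat \<Rightarrow> nat \<Rightarrow> bool" where
  "weierstrass_fact R \<pi> f mu lam \<longleftrightarrow>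
     (\<exists>g u w. in_RT R u \<and> in_RT R w \<and> u * w = 1 \<and>
        degree g = lam \<and> lead_coeff g = 1 \<and>
        (\<forall>i<lam. \<exists>r\<in>R. coeff g i = \<pi> * r) \<and>
        f = fps_const (\<pi> ^ mu) * fps_of_poly g * u)"

definition weier_mu :: "'a set \<Rightarrow> 'a::comm_ring_1 \<Rightarrow> 'a fps \<Rightarrow> enat" where
  "weier_mu R \<pi> f = (if f = 0 then \<infinity> else enat (THE mu. \<exists>lam. weierstrass_fact R \<pi> f mu lam))"

definition weier_lambda :: "'a set \<Rightarrow> 'a::comm_ring_1 \<Rightarrow> 'a fps \<Rightarrow> nat" where
  "weier_lambda R \<pi> f = (if f = 0 then 0 else (THE lam. \<exists>mu. weierstrass_fact R \<pi> f mu lam))"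

definition u_fac :: "nat \<Rightarrow> (nat \<Rightarrow> 'a::field) \<Rightarrow> nat \<Rightarrow> (int \<Rightarrow> 'a) \<Rightarrow> 'a" where
  "u_fac m \<zeta> j \<chi> = (\<zeta> (m * (j + 2)) - 1) / (\<zeta> (m * (j + 2)) * inverse (\<chi> 1) - 1)"

definition S_sum ::
  "nat \<Rightarrow> nat \<Rightarrow> (nat \<Rightarrow> 'a::field) \<Rightarrow> (nat \<Rightarrow> (nat \<Rightarrow> int) \<Rightarrow> 'a) \<Rightarrow> nat \<Rightarrow> 'a" where
  "S_sum p m \<zeta> \<mu> n =
     (let \<chi>0 = (\<lambda>a::int. \<zeta> m powi a) in
      (1 / of_nat (p ^ (m * n))) *
      (\<Sum>\<chi>\<in>PiE {1..n} (\<lambda>_. chars (p ^ m)).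
         (\<Prod>i=1..n. u_fac m \<zeta> (n - i) (\<chi> i)) * dig_char_int p m \<mu> (n + 1) (\<chi>(n + 1 := \<chi>0))))"

end

theory Submission
  imports Defs
begin

locale vf =
  fixes p :: nat and v :: "'a::field_char_0 \<Rightarrow> ereal"
  assumes pprime: "prime p" and val: "valuation v" and vp: "v (of_nat p) = 1"
    and vcompl: "vcomplete v"
begin

lemma v_inf_iff: "v x = \<infinity> \<longleftrightarrow> x = 0" using val unfolding valuation_def by blast
lemma v0[simp]: "v 0 = \<infinity>" using v_inf_iff by blast
lemma v_ninf[simp]: "v x \<noteq> -\<infinity>" using val unfolding valuation_def by blast
lemma v_mult: "v (x * y) = v x + v y" using val unfolding valuation_def by blast
lemma v_add: "min (v x) (v y) \<le> v (x + y)" using val unfolding valuation_def by blast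

lemma v_fin: "x \<noteq> 0 \<Longrightarrow> \<exists>r. v x = ereal r"
  using v_inf_iff[of x] v_ninf[of x] by (cases "v x") auto

lemma v1[simp]: "v 1 = 0"
proof -
  have "v 1 = v 1 + v 1" using v_mult[of 1 1] by simp
  moreover obtain r where "v 1 = ereal r" using v_fin[of 1] by auto
  ultimately show ?thesis by (simp add: zero_ereal_def)
qed

lemma v_m1[simp]: "v (-1) = 0"
proof -
  have "v 1 = v (-1) + v (-1)" using v_mult[of "-1" "-1"] by simp
  moreover obtain r where "v (-1) = ereal r" using v_fin[of "-1"] by auto
  ultimately show ?thesis by (simp add: zero_ereal_def)
qed

lemma v_uminus[simp]: "v (- x) = v x"
  using v_mult[of "-1" x] by simp

lemma v_inverse: "x \<noteq> 0 \<Longrightarrow> v (inverse x) = - v x"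
proof -
  assume "x \<noteq> 0"
  then have "v 1 = v x + v (inverse x)" using v_mult[of x "inverse x"] by simp
  moreover obtain r where "v x = ereal r" using v_fin[OF \<open>x \<noteq> 0\<close>] by auto
  moreover obtain s where "v (inverse x) = ereal s" using v_fin[of "inverse x"] \<open>x \<noteq> 0\<close> by auto
  ultimately show ?thesis by (simp add: zero_ereal_def)
qed

lemma v_divide: "y \<noteq> 0 \<Longrightarrow> v (x / y) = v x - v y"
  using v_mult[of x "inverse y"] v_inverse[of y] by (simp add: divide_inverse minus_ereal_def)

lemma v_diff: "min (v x) (v y) \<le> v (x - y)"
  using v_add[of x "-y"] by simp

lemma v_add_ge: "c \<le> v x \<Longrightarrow> c \<le> v y \<Longrightarrow> c \<le> v (x + y)"
  using v_add[of x y] by (meson min.bounded_iff order_trans)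

lemma v_diff_ge: "c \<le> v x \<Longrightarrow> c \<le> v y \<Longrightarrow> c \<le> v (x - y)"
  using v_add_ge[of c x "-y"] by simp

lemma v_sum_ge: "(\<And>i. i \<in> A \<Longrightarrow> c \<le> v (f i)) \<Longrightarrow> c \<le> v (sum f A)"
proof (induction A rule: infinite_finite_induct)
  case (infinite A) then show ?case by simp
next
  case empty then show ?case by simp
next
  case (insert x F) then show ?case by (simp add: v_add_ge)
qed

lemma v_add_strict: "v x < v y \<Longrightarrow> v (x + y) = v x"
proof -
  assume a: "v x < v y"
  have 1: "v x \<le> v (x + y)" using v_add[of x y] a by simp
  have "min (v (x + y)) (v y) \<le> v x" using v_add[of "x + y" "-y"] by simp
  then have "v (x + y) \<le> v x" using a by (auto simp: min_def split: if_splits)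
  with 1 show ?thesis by simp
qed

lemma v_add_strict': "v y < v x \<Longrightarrow> v (x + y) = v y"
  using v_add_strict[of y x] by (simp add: add.commute)

lemma v_of_nat_ge: "0 \<le> v (of_nat n)"
  by (induction n) (auto intro!: v_add_ge)

lemma v_of_int_ge: "0 \<le> v (of_int z)"
proof (cases "z \<ge> 0")
  case True then show ?thesis using v_of_nat_ge[of "nat z"] by simp
next
  case False then show ?thesis using v_of_nat_ge[of "nat (-z)"]
    by (metis add.inverse_inverse nat_0_le neg_0_le_iff_le nle_le of_int_minus of_int_of_nat_eq v_uminus)
qed

lemma v_power: "v x = ereal r \<Longrightarrow> v (x ^ n) = ereal (real n * r)"
proof (induction n)
  case 0 then show ?case by simp
next
  case (Suc n)
  then show ?case using v_mult[of x "x^n"] by (simp add: algebra_simps)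
qed

lemma v_power_ge: "0 \<le> v x \<Longrightarrow> 0 \<le> v (x ^ n)"
  by (induction n) (auto simp: v_mult)

end

lemma ereal_add_le: "ereal a \<le> x \<Longrightarrow> ereal b \<le> y \<Longrightarrow> ereal (a + b) \<le> x + y"
proof -
  assume "ereal a \<le> x" "ereal b \<le> y"
  then have "ereal a + ereal b \<le> x + y" by (rule add_mono)
  then show ?thesis by simp
qed

context vf begin

lemma v_minus_commute: "v (a - b) = v (b - a)"
proof -
  have "a - b = - (b - a)" by simp
  then show ?thesis by (simp only: v_uminus)
qed

lemma v_all_ge: "(\<And>M. ereal M \<le> v x) \<Longrightarrow> x = 0"
proof -
  assume a: "\<And>M. ereal M \<le> v x"
  have "v x = \<infinity>"
  proof (cases "v x")
    case (real r) then show ?thesis using a[of "r+1"] by simp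
  next
    case PInf then show ?thesis by simp
  next
    case MInf then show ?thesis using a[of 0] by simp
  qed
  then show ?thesis using v_inf_iff by blast
qed

lemma vconv_const: "vconv v (\<lambda>n. c) c"
  unfolding vconv_def by simp

lemma vconv_unique: "vconv v X c \<Longrightarrow> vconv v X d \<Longrightarrow> c = d"
proof -
  assume a: "vconv v X c" "vconv v X d"
  have "ereal M \<le> v (c - d)" for M
  proof -
    obtain N1 where N1: "\<forall>n\<ge>N1. ereal M \<le> v (X n - c)" using a(1) unfolding vconv_def by blast
    obtain N2 where N2: "\<forall>n\<ge>N2. ereal M \<le> v (X n - d)" using a(2) unfolding vconv_def by blast
    let ?n = "max N1 N2"
    have "ereal M \<le> v ((X ?n - d) - (X ?n - c))"
      by (rule v_diff_ge) (use N1 N2 in auto)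
    then show ?thesis by simp
  qed
  then show "c = d" using v_all_ge[of "c - d"] by simp
qed

lemma vconv_add: "vconv v X c \<Longrightarrow> vconv v Y d \<Longrightarrow> vconv v (\<lambda>n. X n + Y n) (c + d)"
  unfolding vconv_def
proof (intro allI)
  fix M :: real
  assume a: "\<forall>M. \<exists>N. \<forall>n\<ge>N. ereal M \<le> v (X n - c)" "\<forall>M. \<exists>N. \<forall>n\<ge>N. ereal M \<le> v (Y n - d)"
  obtain N1 where N1: "\<forall>n\<ge>N1. ereal M \<le> v (X n - c)" using a(1) by blast
  obtain N2 where N2: "\<forall>n\<ge>N2. ereal M \<le> v (Y n - d)" using a(2) by blast
  have "\<forall>n\<ge>max N1 N2. ereal M \<le> v (X n + Y n - (c + d))"
  proof (intro allI impI)
    fix n assume "max N1 N2 \<le> n"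
    then have "ereal M \<le> v ((X n - c) + (Y n - d))" using N1 N2 by (intro v_add_ge) auto
    then show "ereal M \<le> v (X n + Y n - (c + d))" by (simp add: algebra_simps)
  qed
  then show "\<exists>N. \<forall>n\<ge>N. ereal M \<le> v (X n + Y n - (c + d))" by blast
qed

lemma vconv_uminus: "vconv v X c \<Longrightarrow> vconv v (\<lambda>n. - X n) (- c)"
proof -
  have "v (- X n - - c) = v (X n - c)" for n
  proof -
    have "- X n - - c = - (X n - c)" by simp
    then show ?thesis by (simp only: v_uminus)
  qed
  then show "vconv v X c \<Longrightarrow> vconv v (\<lambda>n. - X n) (- c)" unfolding vconv_def by simp
qed

lemma vconv_diff: "vconv v X c \<Longrightarrow> vconv v Y d \<Longrightarrow> vconv v (\<lambda>n. X n - Y n) (c - d)"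
  using vconv_add[of X c "\<lambda>n. - Y n" "- d"] vconv_uminus[of Y d] by simp

lemma vconv_sum: "finite A \<Longrightarrow> (\<And>i. i \<in> A \<Longrightarrow> vconv v (X i) (c i))
   \<Longrightarrow> vconv v (\<lambda>n. \<Sum>i\<in>A. X i n) (\<Sum>i\<in>A. c i)"
proof (induction A rule: finite_induct)
  case empty then show ?case by (simp add: vconv_const)
next
  case (insert x F) then show ?case by (simp add: vconv_add)
qed

lemma vconv_bound: "vconv v X c \<Longrightarrow> \<exists>B N. \<forall>n\<ge>N. ereal B \<le> v (X n)"
proof -
  assume a: "vconv v X c"
  obtain N where N: "\<forall>n\<ge>N. ereal 0 \<le> v (X n - c)" using a unfolding vconv_def by blast
  show ?thesis
  proof (cases "c = 0")
    case True then show ?thesis using N by auto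
  next
    case False
    then obtain r where r: "v c = ereal r" using v_fin by blast
    have "\<forall>n\<ge>N. ereal (min r 0) \<le> v (X n)"
    proof (intro allI impI)
      fix n assume "N \<le> n"
      have "ereal (min r 0) \<le> ereal 0" by simp
      also have "\<dots> \<le> v (X n - c)" using N \<open>N \<le> n\<close> by auto
      finally have 1: "ereal (min r 0) \<le> v (X n - c)" .
      have 2: "ereal (min r 0) \<le> v c" using r by simp
      have "ereal (min r 0) \<le> v ((X n - c) + c)" using 1 2 by (rule v_add_ge)
      then show "ereal (min r 0) \<le> v (X n)" by simp
    qed
    then show ?thesis by blast
  qed
qed

lemma vconv_cmult: "vconv v X c \<Longrightarrow> vconv v (\<lambda>n. a * X n) (a * c)"
proof (cases "a = 0")
  case True then show ?thesis by (simp add: vconv_const)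
next
  case False
  assume X: "vconv v X c"
  obtain r where r: "v a = ereal r" using v_fin[OF False] by blast
  show ?thesis unfolding vconv_def
  proof
    fix M :: real
    obtain N where N: "\<forall>n\<ge>N. ereal (M - r) \<le> v (X n - c)" using X unfolding vconv_def by blast
    have "\<forall>n\<ge>N. ereal M \<le> v (a * X n - a * c)"
    proof (intro allI impI)
      fix n assume "N \<le> n"
      then have "ereal (r + (M - r)) \<le> v a + v (X n - c)" using N r by (intro ereal_add_le) auto
      then show "ereal M \<le> v (a * X n - a * c)" by (simp add: v_mult[symmetric] algebra_simps)
    qed
    then show "\<exists>N. \<forall>n\<ge>N. ereal M \<le> v (a * X n - a * c)" by blast
  qed
qed

lemma vconv_mult: "vconv v X c \<Longrightarrow> vconv v Y d \<Longrightarrow> vconv v (\<lambda>n. X n * Y n) (c * d)"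
proof -
  assume X: "vconv v X c" and Y: "vconv v Y d"
  obtain B N0 where B: "\<forall>n\<ge>N0. ereal B \<le> v (X n)" using vconv_bound[OF X] by blast
  have 2: "vconv v (\<lambda>n. (X n - c) * d) 0"
    using vconv_cmult[OF vconv_diff[OF X vconv_const[of c]], of d] by (simp add: mult.commute)
  have 1: "vconv v (\<lambda>n. X n * (Y n - d)) 0"
    unfolding vconv_def
  proof
    fix M :: real
    obtain N where N: "\<forall>n\<ge>N. ereal (M - B) \<le> v (Y n - d)" using Y unfolding vconv_def by blast
    have "\<forall>n\<ge>max N N0. ereal M \<le> v (X n * (Y n - d) - 0)"
    proof (intro allI impI)
      fix n assume "max N N0 \<le> n"
      then have "ereal (B + (M - B)) \<le> v (X n) + v (Y n - d)" using N B by (intro ereal_add_le) auto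
      then show "ereal M \<le> v (X n * (Y n - d) - 0)" by (simp add: v_mult)
    qed
    then show "\<exists>N. \<forall>n\<ge>N. ereal M \<le> v (X n * (Y n - d) - 0)" by blast
  qed
  have "vconv v (\<lambda>n. X n * (Y n - d) + (X n - c) * d) 0" using vconv_add[OF 1 2] by simp
  then have "vconv v (\<lambda>n. (X n * (Y n - d) + (X n - c) * d) + c * d) (0 + c * d)"
    by (intro vconv_add vconv_const)
  then show ?thesis by (simp add: algebra_simps)
qed

lemma vconv_ge: "vconv v X c \<Longrightarrow> (\<And>n. n \<ge> N0 \<Longrightarrow> b \<le> v (X n)) \<Longrightarrow> b \<le> v c"
proof -
  assume X: "vconv v X c" and b: "\<And>n. n \<ge> N0 \<Longrightarrow> b \<le> v (X n)"
  have mM: "min b (ereal M) \<le> v c" for M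
  proof -
    obtain N where N: "\<forall>n\<ge>N. ereal M \<le> v (X n - c)" using X unfolding vconv_def by blast
    let ?n = "max N N0"
    have "min b (ereal M) \<le> b" by simp
    also have "b \<le> v (X ?n)" using b by simp
    finally have 1: "min b (ereal M) \<le> v (X ?n)" .
    have "min b (ereal M) \<le> ereal M" by simp
    also have "ereal M \<le> v (X ?n - c)" using N by simp
    finally have 2: "min b (ereal M) \<le> v (X ?n - c)" .
    have "min b (ereal M) \<le> v (X ?n - (X ?n - c))" using 1 2 by (rule v_diff_ge)
    then show ?thesis by simp
  qed
  show ?thesis
  proof (cases b)
    case (real r) then show ?thesis using mM[of r] by simp
  next
    case PInf
    then have "c = 0" using mM by (intro v_all_ge) simp
    then show ?thesis by simp
  next
    case MInf then show ?thesis by simp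
  qed
qed

lemma vconv_val: "vconv v X c \<Longrightarrow> (\<And>n. n \<ge> N0 \<Longrightarrow> v (X n) = ereal r) \<Longrightarrow> v c = ereal r"
proof -
  assume X: "vconv v X c" and r: "\<And>n. n \<ge> N0 \<Longrightarrow> v (X n) = ereal r"
  obtain N where N: "\<forall>n\<ge>N. ereal (r + 1) \<le> v (X n - c)" using X unfolding vconv_def by blast
  let ?n = "max N N0"
  have "ereal r < ereal (r + 1)" by simp
  also have "\<dots> \<le> v (X ?n - c)" using N by simp
  also have "\<dots> = v (c - X ?n)" by (rule v_minus_commute)
  finally have "v (X ?n) < v (c - X ?n)" using r[of ?n] by simp
  then have "v (X ?n + (c - X ?n)) = v (X ?n)" by (rule v_add_strict)
  then show ?thesis using r[of ?n] by simp
qed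

lemma vconv_subseq: "vconv v X c \<Longrightarrow> (\<And>n. n \<le> h n) \<Longrightarrow> vconv v (\<lambda>n. X (h n)) c"
  unfolding vconv_def by (meson order_trans)

lemma vconv_tail_ge: "(\<And>i j. i \<le> j \<Longrightarrow> ereal (b i) \<le> v (X j - X i)) \<Longrightarrow> (\<And>M. \<exists>N. M \<le> b N)
   \<Longrightarrow> mono b \<Longrightarrow> \<exists>c. vconv v X c"
proof -
  assume a: "\<And>i j. i \<le> j \<Longrightarrow> ereal (b i) \<le> v (X j - X i)" and bM: "\<And>M. \<exists>N. M \<le> b N" and mb: "mono b"
  have "\<forall>M::real. \<exists>N. \<forall>n\<ge>N. \<forall>k\<ge>N. ereal M \<le> v (X n - X k)"
  proof
    fix M :: real
    obtain N where N: "M \<le> b N" using bM by blast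
    have "ereal M \<le> v (X n - X k)" if "N \<le> n" "N \<le> k" for n k
    proof (cases "k \<le> n")
      case True
      have "M \<le> b k" using N monoD[OF mb \<open>N \<le> k\<close>] by simp
      then have "ereal M \<le> ereal (b k)" by simp
      also have "\<dots> \<le> v (X n - X k)" using a[OF True] .
      finally show ?thesis .
    next
      case False
      have "M \<le> b n" using N monoD[OF mb \<open>N \<le> n\<close>] by simp
      then have "ereal M \<le> ereal (b n)" by simp
      also have "\<dots> \<le> v (X k - X n)" using a[of n k] False by simp
      also have "\<dots> = v (X n - X k)" by (rule v_minus_commute)
      finally show ?thesis .
    qed
    then show "\<exists>N. \<forall>n\<ge>N. \<forall>k\<ge>N. ereal M \<le> v (X n - X k)" by blast
  qed
  then show ?thesis using vcompl unfolding vcomplete_def by blast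
qed

lemma vconv_consec: "(\<And>j. ereal (b j) \<le> v (X (Suc j) - X j)) \<Longrightarrow> (\<And>M. \<exists>N. M \<le> b N)
   \<Longrightarrow> mono b \<Longrightarrow> \<exists>c. vconv v X c"
proof -
  assume a: "\<And>j. ereal (b j) \<le> v (X (Suc j) - X j)" and bM: "\<And>M. \<exists>N. M \<le> b N" and mb: "mono b"
  have "ereal (b i) \<le> v (X j - X i)" if "i \<le> j" for i j
    using that
  proof (induction j rule: dec_induct)
    case base then show ?case by simp
  next
    case (step j)
    have "i \<le> j" using step by simp
    then have "b i \<le> b j" using monoD[OF mb] by blast
    then have "ereal (b i) \<le> ereal (b j)" by simp
    also have "\<dots> \<le> v (X (Suc j) - X j)" using a[of j] .
    finally have "ereal (b i) \<le> v (X (Suc j) - X j)" .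
    then have "ereal (b i) \<le> v ((X (Suc j) - X j) + (X j - X i))" using step(3) by (intro v_add_ge)
    then show ?case by simp
  qed
  then show ?thesis using vconv_tail_ge[of b X] bM mb by blast
qed

end

definition vclosed :: "('a::field \<Rightarrow> ereal) \<Rightarrow> 'a set \<Rightarrow> bool" where
  "vclosed v S \<longleftrightarrow> (\<forall>X c. (\<forall>n. X n \<in> S) \<longrightarrow> vconv v X c \<longrightarrow> c \<in> S)"

context vf begin

lemma Qp_inI: "(\<And>n. X n \<in> \<rat>) \<Longrightarrow> vconv v X x \<Longrightarrow> x \<in> Qp_in v"
  unfolding Qp_in_def by blast

lemma Rats_Qp: "x \<in> \<rat> \<Longrightarrow> x \<in> Qp_in v"
  using Qp_inI[of "\<lambda>n. x" x] vconv_const by blast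

lemma Qp_add: "x \<in> Qp_in v \<Longrightarrow> y \<in> Qp_in v \<Longrightarrow> x + y \<in> Qp_in v"
proof -
  assume "x \<in> Qp_in v" "y \<in> Qp_in v"
  then obtain X Y where "\<And>n. X n \<in> \<rat>" "vconv v X x" "\<And>n. Y n \<in> \<rat>" "vconv v Y y" unfolding Qp_in_def by blast
  then show ?thesis by (intro Qp_inI[of "\<lambda>n. X n + Y n"] vconv_add) auto
qed

lemma Qp_mult: "x \<in> Qp_in v \<Longrightarrow> y \<in> Qp_in v \<Longrightarrow> x * y \<in> Qp_in v"
proof -
  assume "x \<in> Qp_in v" "y \<in> Qp_in v"
  then obtain X Y where "\<And>n. X n \<in> \<rat>" "vconv v X x" "\<And>n. Y n \<in> \<rat>" "vconv v Y y" unfolding Qp_in_def by blast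
  then show ?thesis by (intro Qp_inI[of "\<lambda>n. X n * Y n"] vconv_mult) auto
qed

lemma Qp_uminus: "x \<in> Qp_in v \<Longrightarrow> - x \<in> Qp_in v"
proof -
  assume "x \<in> Qp_in v"
  then obtain X where "\<And>n. X n \<in> \<rat>" "vconv v X x" unfolding Qp_in_def by blast
  then show ?thesis by (intro Qp_inI[of "\<lambda>n. - X n"] vconv_uminus) auto
qed

lemma Qp_inverse: "x \<in> Qp_in v \<Longrightarrow> inverse x \<in> Qp_in v"
proof (cases "x = 0")
  case True then show "inverse x \<in> Qp_in v" using Rats_Qp[of 0] by simp
next
  case False
  assume "x \<in> Qp_in v"
  then obtain X where X: "\<And>n. X n \<in> \<rat>" "vconv v X x" unfolding Qp_in_def by blast
  obtain r where r: "v x = ereal r" using v_fin[OF False] by blast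
  obtain N0 where N0: "\<forall>n\<ge>N0. ereal (r + 1) \<le> v (X n - x)" using X(2) unfolding vconv_def by blast
  have vX: "v (X n) = ereal r" if "n \<ge> N0" for n
  proof -
    have "ereal r < ereal (r + 1)" by simp
    also have "\<dots> \<le> v (X n - x)" using N0 that by simp
    finally have "v x < v (X n - x)" using r by simp
    then have "v (x + (X n - x)) = v x" by (rule v_add_strict)
    then show ?thesis using r by simp
  qed
  have Xnz: "X n \<noteq> 0" if "n \<ge> N0" for n using vX[OF that] by auto
  define Y where "Y n = (if X n = 0 then 1 else inverse (X n))" for n
  have "Y n \<in> \<rat>" for n using X(1)[of n] by (simp add: Y_def)
  moreover have "vconv v Y (inverse x)" unfolding vconv_def
  proof
    fix M :: real
    obtain N where N: "\<forall>n\<ge>N. ereal (M + 2 * r) \<le> v (X n - x)" using X(2) unfolding vconv_def by blast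
    have "ereal M \<le> v (Y n - inverse x)" if "n \<ge> max N N0" for n
    proof -
      have n: "n \<ge> N" "n \<ge> N0" using that by auto
      have "Y n - inverse x = (x - X n) / (X n * x)" using Xnz[OF n(2)] False
        by (simp add: Y_def field_simps)
      then have "v (Y n - inverse x) = v (x - X n) - (v (X n) + v x)"
        using Xnz[OF n(2)] False by (simp add: v_divide v_mult)
      also have "\<dots> = v (X n - x) - ereal (2 * r)" using vX[OF n(2)] r v_minus_commute by simp
      finally have eq: "v (Y n - inverse x) = v (X n - x) - ereal (2 * r)" .
      have "ereal (M + 2 * r) \<le> v (X n - x)" using N n by simp
      then have "ereal (M + 2 * r) - ereal (2 * r) \<le> v (X n - x) - ereal (2 * r)"
        by (intro ereal_minus_mono) auto
      then show ?thesis using eq by simp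
    qed
    then show "\<exists>N. \<forall>n\<ge>N. ereal M \<le> v (Y n - inverse x)" by blast
  qed
  ultimately show ?thesis unfolding Qp_in_def by blast
qed

lemma Qp_subfield: "subfield_of (Qp_in v)"
  unfolding subfield_of_def using Rats_Qp[of 0] Rats_Qp[of 1] Qp_add Qp_mult Qp_uminus Qp_inverse
  by auto

lemma Qp_diff: "x \<in> Qp_in v \<Longrightarrow> y \<in> Qp_in v \<Longrightarrow> x - y \<in> Qp_in v"
  using Qp_add[of x "-y"] Qp_uminus[of y] by simp

lemma Qp_closed: "vclosed v (Qp_in v)"
  unfolding vclosed_def
proof (intro allI impI)
  fix X c assume X: "\<forall>n. X n \<in> Qp_in v" "vconv v X c"
  have "\<exists>q. q \<in> \<rat> \<and> ereal (real n) \<le> v (q - X n)" for n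
  proof -
    obtain Z where Z: "\<And>k. Z k \<in> \<rat>" "vconv v Z (X n)" using X(1) unfolding Qp_in_def by blast
    obtain N where "\<forall>k\<ge>N. ereal (real n) \<le> v (Z k - X n)" using Z(2) unfolding vconv_def by blast
    then show ?thesis using Z(1) by blast
  qed
  then obtain Q where Q: "\<And>n. Q n \<in> \<rat>" "\<And>n. ereal (real n) \<le> v (Q n - X n)" by metis
  have "vconv v Q c" unfolding vconv_def
  proof
    fix M :: real
    obtain N where N: "\<forall>n\<ge>N. ereal M \<le> v (X n - c)" using X(2) unfolding vconv_def by blast
    have "ereal M \<le> v (Q n - c)" if "n \<ge> max N (nat \<lceil>M\<rceil>)" for n
    proof -
      have "M \<le> real n" using that by linarith
      then have "ereal M \<le> v (Q n - X n)" using Q(2)[of n] by (meson ereal_less_eq(3) order_trans)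
      moreover have "ereal M \<le> v (X n - c)" using N that by simp
      ultimately have "ereal M \<le> v ((Q n - X n) + (X n - c))" by (rule v_add_ge)
      then show ?thesis by simp
    qed
    then show "\<exists>N. \<forall>n\<ge>N. ereal M \<le> v (Q n - c)" by blast
  qed
  then show "c \<in> Qp_in v" using Q(1) unfolding Qp_in_def by blast
qed

definition qspan :: "'a set \<Rightarrow> 'a set" where
  "qspan B = {x. \<exists>c. (\<forall>b\<in>B. c b \<in> Qp_in v) \<and> x = (\<Sum>b\<in>B. c b * b)}"

lemma qspan_empty: "qspan {} = {0}"
  unfolding qspan_def by auto

lemma qspan_insert: assumes fB: "finite B" and bB: "b \<notin> B"
  shows "qspan (insert b B) = {y + t * b | y t. y \<in> qspan B \<and> t \<in> Qp_in v}"
proof (rule subset_antisym; rule subsetI)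
  fix x
  assume "x \<in> qspan (insert b B)"
  then obtain c where c: "\<forall>a\<in>insert b B. c a \<in> Qp_in v" "x = (\<Sum>a\<in>insert b B. c a * a)"
    unfolding qspan_def by blast
  have "x = (\<Sum>a\<in>B. c a * a) + c b * b" using c(2) fB bB by simp
  moreover have "(\<Sum>a\<in>B. c a * a) \<in> qspan B" using c(1) unfolding qspan_def by blast
  ultimately show "x \<in> {y + t * b | y t. y \<in> qspan B \<and> t \<in> Qp_in v}" using c(1) by blast
next
  fix x
  assume "x \<in> {y + t * b | y t. y \<in> qspan B \<and> t \<in> Qp_in v}"
  then obtain y t where yt: "x = y + t * b" "y \<in> qspan B" "t \<in> Qp_in v" by blast
  then obtain d where d: "\<forall>a\<in>B. d a \<in> Qp_in v" "y = (\<Sum>a\<in>B. d a * a)" unfolding qspan_def by blast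
  define c where "c = d(b := t)"
  have "(\<Sum>a\<in>B. c a * a) = (\<Sum>a\<in>B. d a * a)" using bB by (intro sum.cong) (auto simp: c_def)
  then have "x = (\<Sum>a\<in>insert b B. c a * a)" using yt d fB bB by (simp add: c_def add.commute)
  moreover have "\<forall>a\<in>insert b B. c a \<in> Qp_in v" using d yt by (auto simp: c_def)
  ultimately show "x \<in> qspan (insert b B)" unfolding qspan_def by blast
qed

lemma qspan_0: "0 \<in> qspan B"
  unfolding qspan_def using Rats_Qp[of 0] by (intro CollectI exI[of _ "\<lambda>_. 0"]) auto

lemma qspan_add: "x \<in> qspan B \<Longrightarrow> y \<in> qspan B \<Longrightarrow> x + y \<in> qspan B"
proof -
  assume "x \<in> qspan B" "y \<in> qspan B"
  then obtain c d where c: "\<forall>b\<in>B. c b \<in> Qp_in v" "x = (\<Sum>b\<in>B. c b * b)"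
    and d: "\<forall>b\<in>B. d b \<in> Qp_in v" "y = (\<Sum>b\<in>B. d b * b)" unfolding qspan_def by blast
  have "x + y = (\<Sum>b\<in>B. (c b + d b) * b)" using c d by (simp add: sum.distrib algebra_simps)
  moreover have "\<forall>b\<in>B. c b + d b \<in> Qp_in v" using c d Qp_add by blast
  ultimately show ?thesis unfolding qspan_def by (intro CollectI exI[of _ "\<lambda>b. c b + d b"]) auto
qed

lemma qspan_smult: "x \<in> qspan B \<Longrightarrow> t \<in> Qp_in v \<Longrightarrow> t * x \<in> qspan B"
proof -
  assume "x \<in> qspan B" "t \<in> Qp_in v"
  then obtain c where c: "\<forall>b\<in>B. c b \<in> Qp_in v" "x = (\<Sum>b\<in>B. c b * b)" unfolding qspan_def by blast
  have "t * x = (\<Sum>b\<in>B. (t * c b) * b)" using c by (simp add: sum_distrib_left algebra_simps)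
  moreover have "\<forall>b\<in>B. t * c b \<in> Qp_in v" using c \<open>t \<in> Qp_in v\<close> Qp_mult by blast
  ultimately show ?thesis unfolding qspan_def by (intro CollectI exI[of _ "\<lambda>b. t * c b"]) auto
qed

lemma qspan_diff: "x \<in> qspan B \<Longrightarrow> y \<in> qspan B \<Longrightarrow> x - y \<in> qspan B"
  using qspan_add[of x B "(-1) * y"] qspan_smult[of y B "-1"] Rats_Qp[of "-1"] by simp

lemma qspan_closed: "finite B \<Longrightarrow> vclosed v (qspan B)"
proof (induction B rule: finite_induct)
  case empty
  show ?case unfolding vclosed_def qspan_empty
  proof (intro allI impI)
    fix X c assume "\<forall>n. X n \<in> {0::'a}" "vconv v X c"
    then have "vconv v (\<lambda>n. 0) c" by (metis singletonD ext)
    then show "c \<in> {0}" using vconv_unique vconv_const by blast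
  qed
next
  case (insert b B)
  note IH = insert.IH
  show ?case
  proof (cases "b \<in> qspan B")
    case True
    have "qspan (insert b B) = qspan B"
    proof
      show "qspan (insert b B) \<subseteq> qspan B"
      proof
        fix x assume "x \<in> qspan (insert b B)"
        then obtain y t where "x = y + t * b" "y \<in> qspan B" "t \<in> Qp_in v"
          by (subst (asm) qspan_insert[OF insert.hyps]) blast
        then show "x \<in> qspan B" using True qspan_add qspan_smult by simp
      qed
      show "qspan B \<subseteq> qspan (insert b B)"
      proof
        fix x assume "x \<in> qspan B"
        then have "x + 0 * b \<in> qspan (insert b B)"
          using Rats_Qp[OF Rats_0] by (subst qspan_insert[OF insert.hyps]) blast
        then show "x \<in> qspan (insert b B)" by simp
      qed
    qed
    then show ?thesis using IH by simp
  next
    case False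
    show ?thesis unfolding vclosed_def
    proof (intro allI impI)
      fix X c assume X: "\<forall>n. X n \<in> qspan (insert b B)" "vconv v X c"
      have "\<forall>n. \<exists>y t. X n = y + t * b \<and> y \<in> qspan B \<and> t \<in> Qp_in v"
        using X(1) by (auto simp: qspan_insert[OF insert.hyps])
      then obtain Y T where YT: "\<And>n. X n = Y n + T n * b" "\<And>n. Y n \<in> qspan B" "\<And>n. T n \<in> Qp_in v"
        by metis
      have cauchy: "\<forall>M::real. \<exists>N. \<forall>n\<ge>N. \<forall>k\<ge>N. ereal M \<le> v (T n - T k)"
      proof (rule ccontr)
        assume "\<not> ?thesis"
        then obtain M0 :: real where M0: "\<forall>N. \<exists>n\<ge>N. \<exists>k\<ge>N. \<not> ereal M0 \<le> v (T n - T k)" by blast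
        then obtain nn kk where nk: "\<And>N. nn N \<ge> N" "\<And>N. kk N \<ge> N"
           "\<And>N. \<not> ereal M0 \<le> v (T (nn N) - T (kk N))" by metis
        define W where "W N = - (Y (nn N) - Y (kk N)) / (T (nn N) - T (kk N))" for N
        have Tnz: "T (nn N) - T (kk N) \<noteq> 0" for N using nk(3)[of N] by auto
        have WB: "W N \<in> qspan B" for N
        proof -
          have "inverse (T (nn N) - T (kk N)) \<in> Qp_in v" using YT(3) Qp_diff Qp_inverse by blast
          then have "(-inverse (T (nn N) - T (kk N))) * (Y (nn N) - Y (kk N)) \<in> qspan B"
            using YT(2) qspan_diff qspan_smult Qp_uminus by blast
          moreover have "(-inverse (T (nn N) - T (kk N))) * (Y (nn N) - Y (kk N)) = W N"
            by (simp add: W_def divide_inverse algebra_simps)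
          ultimately show ?thesis by simp
        qed
        have "vconv v W b" unfolding vconv_def
        proof
          fix M :: real
          obtain N where N: "\<forall>n\<ge>N. ereal (M + M0) \<le> v (X n - c)" using X(2) unfolding vconv_def by blast
          have "ereal M \<le> v (W n - b)" if "n \<ge> N" for n
          proof -
            let ?a = "nn n" and ?b = "kk n"
            have "W n - b = - (X ?a - X ?b) / (T ?a - T ?b)"
              using Tnz[of n] by (simp add: W_def YT(1) field_simps)
            then have eq: "v (W n - b) = v (X ?a - X ?b) - v (T ?a - T ?b)"
              using Tnz[of n] by (simp add: v_divide v_minus_commute[of "X (kk n)"])
            obtain r where r: "v (T ?a - T ?b) = ereal r" using v_fin[OF Tnz[of n]] by blast
            have rM: "r < M0" using nk(3)[of n] r by simp
            have "ereal (M + M0) \<le> v ((X ?a - c) - (X ?b - c))"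
              by (rule v_diff_ge) (use N nk(1,2)[of n] that in auto)
            then have "ereal (M + M0) \<le> v (X ?a - X ?b)" by simp
            then have "ereal (M + M0) - ereal r \<le> v (X ?a - X ?b) - ereal r"
              by (intro ereal_minus_mono) auto
            moreover have "ereal M \<le> ereal (M + M0) - ereal r" using rM by simp
            ultimately have "ereal M \<le> v (X ?a - X ?b) - ereal r" by (rule order_trans[rotated])
            then show ?thesis using eq r by simp
          qed
          then show "\<exists>N. \<forall>n\<ge>N. ereal M \<le> v (W n - b)" by blast
        qed
        then have "b \<in> qspan B" using IH WB unfolding vclosed_def by blast
        then show False using False by blast
      qed
      then obtain t where t: "vconv v T t" using vcompl unfolding vcomplete_def by blast
      have tQ: "t \<in> Qp_in v" using Qp_closed t YT(3) unfolding vclosed_def by blast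
      have "vconv v (\<lambda>n. X n - T n * b) (c - t * b)"
        using vconv_diff[OF X(2) vconv_cmult[OF t, of b]] by (simp add: mult.commute)
      then have "vconv v Y (c - t * b)" using YT(1) by (simp add: algebra_simps)
      then have "c - t * b \<in> qspan B" using IH YT(2) unfolding vclosed_def by blast
      then have "(c - t * b) + t * b \<in> qspan (insert b B)"
        using tQ by (subst qspan_insert[OF insert.hyps]) blast
      then show "c \<in> qspan (insert b B)" by simp
    qed
  qed
qed

end

locale vK = vf +
  fixes K :: "'a set"
  assumes Kext: "finite_ext_Qp v K"
begin

lemma K_sub: "subfield_of K" using Kext unfolding finite_ext_Qp_def by blast
lemma K_0: "0 \<in> K" using K_sub unfolding subfield_of_def by blast
lemma K_1: "1 \<in> K" using K_sub unfolding subfield_of_def by blast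
lemma K_add: "x \<in> K \<Longrightarrow> y \<in> K \<Longrightarrow> x + y \<in> K" using K_sub unfolding subfield_of_def by blast
lemma K_mult: "x \<in> K \<Longrightarrow> y \<in> K \<Longrightarrow> x * y \<in> K" using K_sub unfolding subfield_of_def by blast
lemma K_uminus: "x \<in> K \<Longrightarrow> - x \<in> K" using K_sub unfolding subfield_of_def by blast
lemma K_inverse: "x \<in> K \<Longrightarrow> inverse x \<in> K" using K_sub unfolding subfield_of_def by blast
lemma K_diff: "x \<in> K \<Longrightarrow> y \<in> K \<Longrightarrow> x - y \<in> K" using K_add[of x "-y"] K_uminus[of y] by (simp)
lemma K_divide: "x \<in> K \<Longrightarrow> y \<in> K \<Longrightarrow> x / y \<in> K" using K_mult K_inverse by (simp add: divide_inverse)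
lemma K_sum: "(\<And>i. i \<in> A \<Longrightarrow> f i \<in> K) \<Longrightarrow> sum f A \<in> K"
  by (induction A rule: infinite_finite_induct) (auto simp: K_0 K_add)
lemma K_prod: "(\<And>i. i \<in> A \<Longrightarrow> f i \<in> K) \<Longrightarrow> prod f A \<in> K"
  by (induction A rule: infinite_finite_induct) (auto simp: K_1 K_mult)
lemma K_of_nat: "of_nat n \<in> K" by (induction n) (auto simp: K_0 K_1 K_add)
lemma K_of_int: "of_int z \<in> K"
proof (cases "z \<ge> 0")
  case True
  then have "of_int z = (of_nat (nat z) :: 'a)" by simp
  then show ?thesis using K_of_nat by metis
next
  case False
  then have "of_int z = - (of_nat (nat (- z)) :: 'a)" by simp
  then show ?thesis using K_of_nat K_uminus by metis
qed
lemma K_power: "x \<in> K \<Longrightarrow> x ^ n \<in> K" by (induction n) (auto simp: K_1 K_mult)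

lemma K_closed: "vclosed v K"
proof -
  obtain B where B: "finite B" "B \<subseteq> K" "\<forall>x\<in>K. \<exists>c. (\<forall>b\<in>B. c b \<in> Qp_in v) \<and> x = (\<Sum>b\<in>B. c b * b)"
    using Kext unfolding finite_ext_Qp_def by blast
  have QK: "Qp_in v \<subseteq> K" using Kext unfolding finite_ext_Qp_def by blast
  have "K = qspan B"
  proof
    show "K \<subseteq> qspan B" using B(3) unfolding qspan_def by blast
    show "qspan B \<subseteq> K" unfolding qspan_def using QK B(2) by (auto intro!: K_sum K_mult)
  qed
  then show ?thesis using qspan_closed[OF B(1)] by simp
qed

definition RR :: "'a set" where "RR = int_ring v K"

lemma RR_iff: "x \<in> RR \<longleftrightarrow> x \<in> K \<and> 0 \<le> v x" unfolding RR_def int_ring_def by simp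

lemma RR_closed: "vclosed v RR"
  unfolding vclosed_def
proof (intro allI impI)
  fix X c assume X: "\<forall>n. X n \<in> RR" "vconv v X c"
  have "c \<in> K" using K_closed X unfolding vclosed_def RR_iff by blast
  moreover have "0 \<le> v c" using vconv_ge[OF X(2), of 0] X(1) by (auto simp: RR_iff)
  ultimately show "c \<in> RR" by (simp add: RR_iff)
qed

lemma RR_0: "0 \<in> RR" by (simp add: RR_iff K_0)
lemma RR_1: "1 \<in> RR" by (simp add: RR_iff K_1)
lemma RR_add: "x \<in> RR \<Longrightarrow> y \<in> RR \<Longrightarrow> x + y \<in> RR" by (simp add: RR_iff K_add v_add_ge)
lemma RR_uminus: "x \<in> RR \<Longrightarrow> - x \<in> RR" by (simp add: RR_iff K_uminus)
lemma RR_diff: "x \<in> RR \<Longrightarrow> y \<in> RR \<Longrightarrow> x - y \<in> RR" by (simp add: RR_iff K_diff v_diff_ge)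
lemma RR_mult: "x \<in> RR \<Longrightarrow> y \<in> RR \<Longrightarrow> x * y \<in> RR" by (simp add: RR_iff K_mult v_mult)
lemma RR_sum: "(\<And>i. i \<in> A \<Longrightarrow> f i \<in> RR) \<Longrightarrow> sum f A \<in> RR"
  by (induction A rule: infinite_finite_induct) (auto simp: RR_0 RR_add)
lemma RR_prod: "(\<And>i. i \<in> A \<Longrightarrow> f i \<in> RR) \<Longrightarrow> prod f A \<in> RR"
  by (induction A rule: infinite_finite_induct) (auto simp: RR_1 RR_mult)
lemma RR_of_nat: "of_nat n \<in> RR" by (simp add: RR_iff K_of_nat v_of_nat_ge)
lemma RR_of_int: "of_int n \<in> RR" by (simp add: RR_iff K_of_int v_of_int_ge)
lemma RR_power: "x \<in> RR \<Longrightarrow> x ^ n \<in> RR" by (induction n) (auto simp: RR_1 RR_mult)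
lemma RR_inverse: "x \<in> K \<Longrightarrow> v x = 0 \<Longrightarrow> inverse x \<in> RR"
proof -
  assume "x \<in> K" "v x = 0"
  then have "x \<noteq> 0" by auto
  then have "v (inverse x) = 0" using v_inverse \<open>v x = 0\<close> by simp
  then show ?thesis using K_inverse \<open>x \<in> K\<close> by (simp add: RR_iff)
qed

end

context vf begin

lemma v_prod: "finite A \<Longrightarrow> v (prod f A) = (\<Sum>i\<in>A. v (f i))"
  by (induction A rule: finite_induct) (auto simp: v_mult)

lemma rou_v0: "w ^ n = 1 \<Longrightarrow> n > 0 \<Longrightarrow> v w = 0"
proof -
  assume w: "w ^ n = 1" "n > 0"
  then have "w \<noteq> 0" by (cases "w = 0") (auto simp: power_0_left)
  then obtain r where r: "v w = ereal r" using v_fin by blast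
  have "v (w ^ n) = ereal (real n * r)" using v_power[OF r] .
  then have "real n * r = 0" using w by (simp add: zero_ereal_def)
  then show ?thesis using r w by (simp add: zero_ereal_def)
qed

lemma v_geo: "0 \<le> v x \<Longrightarrow> v (x - 1) \<le> v (x ^ n - 1)"
proof -
  assume x: "0 \<le> v x"
  have "0 \<le> v (sum ((^) x) {..<n})" using x by (intro v_sum_ge v_power_ge) auto
  then have "v (x - 1) + 0 \<le> v (x - 1) + v (sum ((^) x) {..<n})" by (intro add_left_mono)
  then show ?thesis by (simp add: power_diff_1_eq v_mult)
qed

lemma v_rou_coprime: "w ^ N = 1 \<Longrightarrow> N > 0 \<Longrightarrow> coprime b N \<Longrightarrow> v (w ^ b - 1) = v (w - 1)"
proof -
  assume w: "w ^ N = 1" "N > 0" and cop: "coprime b N"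
  have vw: "v w = 0" using rou_v0 w by blast
  have 1: "v (w - 1) \<le> v (w ^ b - 1)" using v_geo vw by simp
  have "v (w ^ b - 1) \<le> v (w - 1)"
  proof (cases "N = 1")
    case True then have "w = 1" using w by simp
    then show ?thesis by simp
  next
    case False
    obtain x y where xy: "b * x = N * y + 1" using coprime_bezout_strong[OF cop False] by blast
    have "(w ^ b) ^ x = w" using w(1) xy by (simp add: power_mult[symmetric] power_add power_mult)
    moreover have "0 \<le> v (w ^ b)" using v_power_ge vw by simp
    ultimately show ?thesis using v_geo[of "w ^ b" x] by simp
  qed
  with 1 show ?thesis by simp
qed

lemma prod_roots_poly:
  fixes \<omega> r :: 'a
  assumes om: "\<omega> ^ P = 1" and prim: "\<And>j. 0 < j \<Longrightarrow> j < P \<Longrightarrow> \<omega> ^ j \<noteq> 1" and r: "r \<noteq> 0"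
    and P: "P > 0"
  shows "(\<Prod>i<P. x - r * \<omega> ^ i) = x ^ P - r ^ P"
proof -
  let ?p = "\<Prod>i<P. [:- (r * \<omega> ^ i), 1:]"
  let ?q = "monom 1 P - [:r ^ P:]"
  let ?A = "(\<lambda>i. r * \<omega> ^ i) ` {..<P}"
  have om0: "\<omega> \<noteq> 0" using om P by (cases "\<omega> = 0") (auto simp: power_0_left)
  have inj: "inj_on (\<lambda>i. r * \<omega> ^ i) {..<P}"
  proof (rule inj_onI)
    fix i j assume ij: "i \<in> {..<P}" "j \<in> {..<P}" "r * \<omega> ^ i = r * \<omega> ^ j"
    then have eq: "\<omega> ^ i = \<omega> ^ j" using r by simp
    show "i = j"
    proof (rule ccontr)
      assume "i \<noteq> j"
      then consider "i < j" | "j < i" by linarith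
      then show False
      proof cases
        case 1
        then have "\<omega> ^ j = \<omega> ^ i * \<omega> ^ (j - i)" by (simp add: power_add[symmetric])
        then have "\<omega> ^ (j - i) = 1" using eq om0 by simp
        moreover have "j - i < P" "0 < j - i" using 1 ij by auto
        ultimately show False using prim[of "j - i"] by blast
      next
        case 2
        then have "\<omega> ^ i = \<omega> ^ j * \<omega> ^ (i - j)" by (simp add: power_add[symmetric])
        then have "\<omega> ^ (i - j) = 1" using eq om0 by simp
        moreover have "i - j < P" "0 < i - j" using 2 ij by auto
        ultimately show False using prim[of "i - j"] by blast
      qed
    qed
  qed
  have cardA: "card ?A = P" using card_image[OF inj] by simp
  have degp: "degree ?p = P"
    by (subst degree_prod_eq_sum_degree) auto
  have lcp: "coeff ?p P = 1" using lead_coeff_prod[of "\<lambda>i. [:- (r * \<omega> ^ i), 1:]" "{..<P}"] degp by simp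
  have degq: "degree ?q \<le> P"
    by (intro degree_diff_le) (auto simp: degree_monom_le)
  have "?p = ?q"
  proof (rule poly_eqI_degree_lead_coeff[of _ P _ ?A])
    show "coeff ?p P = coeff ?q P" using lcp P by (cases P) auto
    show "P \<le> card ?A" using cardA by simp
    show "degree ?p \<le> P" using degp by simp
    show "degree ?q \<le> P" by (rule degq)
    fix z assume "z \<in> ?A"
    then obtain i where i: "i < P" "z = r * \<omega> ^ i" by auto
    have "poly ?p z = 0" using i by (auto simp: poly_prod prod_zero_iff intro!: bexI[of _ i])
    moreover have "poly ?q z = 0"
    proof -
      have "z ^ P = r ^ P * (\<omega> ^ P) ^ i" using i by (simp add: power_mult_distrib power_mult[symmetric] mult.commute)
      then show ?thesis using om by (simp add: poly_monom)
    qed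
    ultimately show "poly ?p z = poly ?q z" by simp
  qed
  then have "poly ?p x = poly ?q x" by simp
  then show ?thesis by (simp add: poly_prod poly_monom)
qed

lemma prod_roots_one:
  fixes \<omega> :: 'a
  assumes om: "\<omega> ^ P = 1" and prim: "\<And>j. 0 < j \<Longrightarrow> j < P \<Longrightarrow> \<omega> ^ j \<noteq> 1" and P: "P > 0"
  shows "(\<Prod>i\<in>{1..<P}. 1 - \<omega> ^ i) = of_nat P"
proof -
  let ?p = "\<Prod>i\<in>{1..<P}. [:- (\<omega> ^ i), 1:]"
  let ?q = "\<Sum>j<P. monom (1::'a) j"
  let ?A = "(\<lambda>i. \<omega> ^ i) ` {1..<P}"
  have om0: "\<omega> \<noteq> 0" using om P by (cases "\<omega> = 0") (auto simp: power_0_left)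
  have inj: "inj_on (\<lambda>i. \<omega> ^ i) {1..<P}"
  proof (rule inj_onI)
    fix i j assume ij: "i \<in> {1..<P}" "j \<in> {1..<P}" "\<omega> ^ i = \<omega> ^ j"
    show "i = j"
    proof (rule ccontr)
      assume "i \<noteq> j"
      then consider "i < j" | "j < i" by linarith
      then show False
      proof cases
        case 1
        then have "\<omega> ^ j = \<omega> ^ i * \<omega> ^ (j - i)" by (simp add: power_add[symmetric])
        then have "\<omega> ^ (j - i) = 1" using ij om0 by simp
        moreover have "j - i < P" "0 < j - i" using 1 ij by auto
        ultimately show False using prim[of "j - i"] by blast
      next
        case 2
        then have "\<omega> ^ i = \<omega> ^ j * \<omega> ^ (i - j)" by (simp add: power_add[symmetric])
        then have "\<omega> ^ (i - j) = 1" using ij om0 by simp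
        moreover have "i - j < P" "0 < i - j" using 2 ij by auto
        ultimately show False using prim[of "i - j"] by blast
      qed
    qed
  qed
  have cardA: "card ?A = P - 1" using card_image[OF inj] by simp
  have degp: "degree ?p = P - 1"
    by (subst degree_prod_eq_sum_degree) auto
  have lcp: "coeff ?p (P - 1) = 1" using lead_coeff_prod[of "\<lambda>i. [:- (\<omega> ^ i), 1:]" "{1..<P}"] degp by simp
  have degq: "degree ?q \<le> P - 1"
    by (rule degree_le) (auto simp: coeff_sum)
  have cq: "coeff ?q (P - 1) = 1" using P by (simp add: coeff_sum)
  have "?p = ?q"
  proof (rule poly_eqI_degree_lead_coeff[of _ "P - 1" _ ?A])
    show "coeff ?p (P - 1) = coeff ?q (P - 1)" using lcp cq by simp
    show "P - 1 \<le> card ?A" using cardA by simp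
    show "degree ?p \<le> P - 1" using degp by simp
    show "degree ?q \<le> P - 1" by (rule degq)
    fix z assume "z \<in> ?A"
    then obtain i where i: "i \<in> {1..<P}" "z = \<omega> ^ i" by blast
    have "poly ?p z = 0" using i by (auto simp: poly_prod prod_zero_iff intro!: bexI[of _ i])
    moreover have "poly ?q z = 0"
    proof -
      have z1: "z \<noteq> 1" using prim[of i] i by auto
      have "z ^ P = 1" using i om by (simp add: power_mult[symmetric] mult.commute power_mult)
      then have "(\<Sum>j<P. z ^ j) = 0" using geometric_sum[OF z1, of P] by simp
      then show ?thesis by (simp add: poly_sum poly_monom)
    qed
    ultimately show "poly ?p z = poly ?q z" by simp
  qed
  then have "poly ?p 1 = poly ?q 1" by simp
  then show ?thesis by (simp add: poly_prod poly_sum poly_monom)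
qed

end

locale vz = vf +
  fixes \<zeta> :: "nat \<Rightarrow> 'a"
  assumes roots: "compatible_roots p \<zeta>"
begin

lemma p_gt1: "p > 1" using pprime prime_gt_1_nat by blast

lemma z_pow: "\<zeta> k ^ (p ^ k) = 1" using roots unfolding compatible_roots_def by blast
lemma z_prim: "0 < j \<Longrightarrow> j < p ^ k \<Longrightarrow> \<zeta> k ^ j \<noteq> 1" using roots unfolding compatible_roots_def by blast
lemma z_compat: "\<zeta> (Suc k) ^ p = \<zeta> k" using roots unfolding compatible_roots_def by blast

lemma z_desc: "\<zeta> (k + j) ^ (p ^ j) = \<zeta> k"
proof (induction j)
  case 0 then show ?case by simp
next
  case (Suc j)
  have "\<zeta> (k + Suc j) ^ (p ^ Suc j) = (\<zeta> (Suc (k + j)) ^ p) ^ (p ^ j)"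
    by (simp add: power_mult[symmetric] mult.commute)
  then show ?case using Suc z_compat by simp
qed

lemma z_nz: "\<zeta> k \<noteq> 0" using z_pow[of k] p_gt1 by (cases "\<zeta> k = 0") (auto simp: power_0_left)

lemma z_v0: "v (\<zeta> k) = 0" using rou_v0[OF z_pow] p_gt1 by simp

lemma z_ne1: "k \<ge> 1 \<Longrightarrow> \<zeta> k \<noteq> 1"
  using z_prim[of 1 k] p_gt1 one_less_power[of p k] by simp

definition xk :: "nat \<Rightarrow> real" where "xk k = 1 / ((real p - 1) * real p ^ (k - 1))"

lemma v_z1_base: "v (\<zeta> 1 - 1) = ereal (xk 1)"
proof -
  have om: "\<zeta> 1 ^ p = 1" using z_pow[of 1] by simp
  have prim: "\<And>j. 0 < j \<Longrightarrow> j < p \<Longrightarrow> \<zeta> 1 ^ j \<noteq> 1" using z_prim[of _ 1] by simp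
  have P: "(\<Prod>i\<in>{1..<p}. 1 - \<zeta> 1 ^ i) = of_nat p" using prod_roots_one[OF om prim] p_gt1 by simp
  have each: "v (1 - \<zeta> 1 ^ i) = v (\<zeta> 1 - 1)" if "i \<in> {1..<p}" for i
  proof -
    have "\<not> p dvd i" using that by (auto dest: nat_dvd_not_less)
    then have "coprime p i" using pprime by (intro prime_imp_coprime)
    then have "coprime i p" by (simp add: coprime_commute)
    then have "v (\<zeta> 1 ^ i - 1) = v (\<zeta> 1 - 1)" using v_rou_coprime[OF om] p_gt1 by simp
    then show ?thesis by (simp add: v_minus_commute)
  qed
  obtain r where r: "v (\<zeta> 1 - 1) = ereal r" using v_fin z_ne1[of 1] by force
  have "v (of_nat p :: 'a) = v (\<Prod>i\<in>{1..<p}. 1 - \<zeta> 1 ^ i)" using P by simp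
  also have "\<dots> = (\<Sum>i\<in>{1..<p}. v (1 - \<zeta> 1 ^ i))" by (rule v_prod) simp
  also have "\<dots> = (\<Sum>i\<in>{1..<p}. ereal r)" using each r by simp
  also have "\<dots> = ereal (real (p - 1) * r)" by (simp add: sum_ereal[symmetric])
  finally have "v (of_nat p :: 'a) = ereal (real (p - 1) * r)" .
  then have "ereal (real (p - 1) * r) = ereal 1" using vp by (simp only: one_ereal_def)
  then have "real (p - 1) * r = 1" by (simp only: ereal.inject)
  then have "(real p - 1) * r = 1" using p_gt1 by (cases p) auto
  then have "r = 1 / (real p - 1)" using p_gt1 by (simp add: field_simps)
  then show ?thesis using r by (simp add: xk_def)
qed

lemma v_z1_step: "k \<ge> 1 \<Longrightarrow> v (\<zeta> k - 1) = ereal (real p * r) \<Longrightarrow> \<zeta> (Suc k) \<noteq> 1 \<Longrightarrow>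
   v (\<zeta> (Suc k) - 1) = ereal r"
proof -
  assume k: "k \<ge> 1" and vk: "v (\<zeta> k - 1) = ereal (real p * r)" and ne: "\<zeta> (Suc k) \<noteq> 1"
  have om: "\<zeta> 1 ^ p = 1" using z_pow[of 1] by simp
  have prim: "\<And>j. 0 < j \<Longrightarrow> j < p \<Longrightarrow> \<zeta> 1 ^ j \<noteq> 1" using z_prim[of _ 1] by simp
  have P: "(\<Prod>i<p. 1 - \<zeta> (Suc k) * \<zeta> 1 ^ i) = 1 - \<zeta> (Suc k) ^ p"
    using prod_roots_poly[OF om prim z_nz[of "Suc k"]] p_gt1 by simp
  have z1: "\<zeta> 1 = \<zeta> (Suc k) ^ (p ^ k)" using z_desc[of 1 k] by simp
  have each: "v (1 - \<zeta> (Suc k) * \<zeta> 1 ^ i) = v (\<zeta> (Suc k) - 1)" for i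
  proof -
    have "\<zeta> 1 ^ i = \<zeta> (Suc k) ^ (p ^ k * i)" using z1 by (simp add: power_mult)
    then have e: "\<zeta> (Suc k) * \<zeta> 1 ^ i = \<zeta> (Suc k) ^ (1 + i * p ^ k)"
      by (simp add: power_add mult.commute)
    have "coprime (1 + i * p ^ k) (p ^ Suc k)"
    proof -
      have "coprime (1 + i * p ^ k) p"
      proof -
        have "p dvd i * p ^ k" using k by (simp add: dvd_power)
        then have "\<not> p dvd (1 + i * p ^ k)" using p_gt1 dvd_add_left_iff[of p "i * p^k" 1] by auto
        then have "coprime p (1 + i * p ^ k)" using pprime by (intro prime_imp_coprime)
        then show ?thesis by (simp add: coprime_commute)
      qed
      then show ?thesis by simp
    qed
    then have "v (\<zeta> (Suc k) ^ (1 + i * p ^ k) - 1) = v (\<zeta> (Suc k) - 1)"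
      by (intro v_rou_coprime[OF z_pow]) (use p_gt1 in auto)
    moreover have "v (1 - \<zeta> (Suc k) * \<zeta> 1 ^ i) = v (\<zeta> (Suc k) ^ (1 + i * p ^ k) - 1)"
      by (subst e) (rule v_minus_commute)
    ultimately show ?thesis by simp
  qed
  obtain s where s: "v (\<zeta> (Suc k) - 1) = ereal s" using v_fin ne by force
  have "v (1 - \<zeta> (Suc k) ^ p) = v (\<Prod>i<p. 1 - \<zeta> (Suc k) * \<zeta> 1 ^ i)" using P by simp
  also have "\<dots> = (\<Sum>i<p. v (1 - \<zeta> (Suc k) * \<zeta> 1 ^ i))" by (rule v_prod) simp
  also have "\<dots> = (\<Sum>i<p. ereal s)" using each s by simp
  also have "\<dots> = ereal (real p * s)" by (simp add: sum_ereal[symmetric])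
  finally have "v (\<zeta> k - 1) = ereal (real p * s)" using z_compat[of k] by (simp add: v_minus_commute)
  then have "real p * s = real p * r" using vk by (metis ereal.inject)
  then have "s = r" using p_gt1 by (metis mult_cancel_left of_nat_eq_0_iff not_one_less_zero gr_implies_not0)
  then show ?thesis using s by simp
qed

lemma v_z1: "k \<ge> 1 \<Longrightarrow> v (\<zeta> k - 1) = ereal (xk k)"
proof (induction k rule: dec_induct)
  case base then show ?case using v_z1_base by simp
next
  case (step k)
  have "xk k = real p * xk (Suc k)" using step(1) p_gt1
    by (cases k) (auto simp: xk_def field_simps)
  then show ?case using v_z1_step[OF step(1)] step(3) z_ne1[of "Suc k"] by simp
qed

lemma xk_pos: "xk k > 0" using p_gt1 by (simp add: xk_def)

end

lemma pow_swap: "((x::'a::comm_monoid_mult) ^ i) ^ t = (x ^ t) ^ i"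
  by (simp add: power_mult[symmetric] mult.commute)

context vz begin

lemma z_pow_pow: "(\<zeta> k ^ i) ^ (p ^ k) = 1"
  using z_pow[of k] by (subst pow_swap) simp

lemma z_pow_mod: "\<zeta> k ^ a = \<zeta> k ^ (a mod p ^ k)"
proof -
  have "\<zeta> k ^ a = \<zeta> k ^ (p ^ k * (a div p ^ k) + a mod p ^ k)" by (simp only: mult_div_mod_eq)
  also have "\<dots> = (\<zeta> k ^ p ^ k) ^ (a div p ^ k) * \<zeta> k ^ (a mod p ^ k)"
    by (simp only: power_add power_mult)
  finally show ?thesis using z_pow by simp
qed

lemma z_pow_eq1: "\<zeta> k ^ t = 1 \<longleftrightarrow> p ^ k dvd t"
proof
  assume "\<zeta> k ^ t = 1"
  then have "\<zeta> k ^ (t mod p ^ k) = 1" using z_pow_mod by simp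
  moreover have "t mod p ^ k < p ^ k" using p_gt1 by simp
  ultimately have "t mod p ^ k = 0" using z_prim[of "t mod p ^ k" k] by (cases "t mod p ^ k = 0") auto
  then show "p ^ k dvd t" by (simp add: mod_eq_0_iff_dvd)
next
  assume "p ^ k dvd t"
  then obtain s where "t = p ^ k * s" by blast
  then show "\<zeta> k ^ t = 1" using z_pow by (simp add: power_mult)
qed

lemma z_inj: "inj_on (\<lambda>i. \<zeta> k ^ i) {..<p ^ k}"
proof (rule inj_onI)
  fix i j assume ij: "i \<in> {..<p ^ k}" "j \<in> {..<p ^ k}" "\<zeta> k ^ i = \<zeta> k ^ j"
  show "i = j"
  proof (rule ccontr)
    assume "i \<noteq> j"
    then consider "i < j" | "j < i" by linarith
    then show False
    proof cases
      case 1
      then have "\<zeta> k ^ j = \<zeta> k ^ i * \<zeta> k ^ (j - i)" by (simp add: power_add[symmetric])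
      then have "\<zeta> k ^ (j - i) = 1" using ij z_nz by simp
      moreover have "j - i < p ^ k" "0 < j - i" using 1 ij by auto
      ultimately show False using z_prim by blast
    next
      case 2
      then have "\<zeta> k ^ i = \<zeta> k ^ j * \<zeta> k ^ (i - j)" by (simp add: power_add[symmetric])
      then have "\<zeta> k ^ (i - j) = 1" using ij z_nz by simp
      moreover have "i - j < p ^ k" "0 < i - j" using 2 ij by auto
      ultimately show False using z_prim by blast
    qed
  qed
qed

lemma roots_all: "w ^ (p ^ k) = 1 \<Longrightarrow> w \<in> (\<lambda>i. \<zeta> k ^ i) ` {..<p ^ k}"
proof -
  assume w: "w ^ (p ^ k) = 1"
  let ?q = "monom (1::'a) (p ^ k) - 1"
  have pk: "p ^ k > 0" using p_gt1 by simp
  have cq: "coeff ?q (p ^ k) = 1" using pk by simp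
  have q0: "?q \<noteq> 0"
  proof
    assume "?q = 0"
    then have "coeff ?q (p ^ k) = 0" by (simp only: coeff_0)
    then show False using cq by simp
  qed
  have dq: "degree ?q \<le> p ^ k" by (intro degree_diff_le) (auto simp: degree_monom_le)
  let ?S = "{x. poly ?q x = 0}"
  have fin: "finite ?S" using poly_roots_finite[OF q0] .
  have sub: "(\<lambda>i. \<zeta> k ^ i) ` {..<p ^ k} \<subseteq> ?S"
  proof
    fix x assume "x \<in> (\<lambda>i. \<zeta> k ^ i) ` {..<p ^ k}"
    then obtain i where "x = \<zeta> k ^ i" by blast
    then have "x ^ (p ^ k) = (\<zeta> k ^ p ^ k) ^ i" by (simp add: pow_swap[of _ i])
    then show "x \<in> ?S" using z_pow by (simp add: poly_monom)
  qed
  have "card ?S \<le> p ^ k" using card_poly_roots_bound[OF q0] dq by simp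
  also have "\<dots> = card ((\<lambda>i. \<zeta> k ^ i) ` {..<p ^ k})" using card_image[OF z_inj] by simp
  finally have "(\<lambda>i. \<zeta> k ^ i) ` {..<p ^ k} = ?S" using card_seteq[OF fin sub] by simp
  moreover have "w \<in> ?S" using w by (simp add: poly_monom)
  ultimately show ?thesis by simp
qed

lemma orth: "(\<Sum>i<p ^ k. (\<zeta> k ^ i) ^ t) = (if p ^ k dvd t then of_nat (p ^ k) else 0)"
proof (cases "p ^ k dvd t")
  case True
  then have "(\<zeta> k ^ i) ^ t = 1" for i using z_pow_eq1[of k t]
    by (subst pow_swap) simp
  then show ?thesis using True by simp
next
  case False
  have ne: "\<zeta> k ^ t \<noteq> 1" using z_pow_eq1 False by simp
  have "(\<Sum>i<p ^ k. (\<zeta> k ^ i) ^ t) = (\<Sum>i<p ^ k. (\<zeta> k ^ t) ^ i)"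
    by (simp add: pow_swap[of _ _ t])
  also have "\<dots> = ((\<zeta> k ^ t) ^ (p ^ k) - 1) / (\<zeta> k ^ t - 1)" using geometric_sum[OF ne] by simp
  also have "(\<zeta> k ^ t) ^ (p ^ k) = 1" using z_pow_pow .
  finally show ?thesis using False by simp
qed

lemma char_nz: "\<chi> \<in> chars N \<Longrightarrow> \<chi> 1 \<noteq> 0"
proof -
  assume c: "\<chi> \<in> chars N"
  have "\<chi> (1 + (-1)) = \<chi> 1 * \<chi> (-1)" using c unfolding chars_def by blast
  then have "\<chi> 1 * \<chi> (-1) = 1" using c unfolding chars_def by simp
  then show ?thesis by auto
qed

lemma char_pow: "\<chi> \<in> chars N \<Longrightarrow> \<chi> a = (\<chi> 1) powi a"
proof -
  assume c: "\<chi> \<in> chars N"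
  have mult: "\<chi> (a + b) = \<chi> a * \<chi> b" for a b using c unfolding chars_def by blast
  have c0: "\<chi> 0 = 1" using c unfolding chars_def by blast
  have nat: "\<chi> (int n) = \<chi> 1 ^ n" for n
  proof (induction n)
    case 0 then show ?case using c0 by simp
  next
    case (Suc n)
    have "\<chi> (int (Suc n)) = \<chi> (int n + 1)" by (simp add: add.commute)
    also have "\<dots> = \<chi> (int n) * \<chi> 1" by (rule mult)
    finally show ?case using Suc by simp
  qed
  have nz: "\<chi> 1 \<noteq> 0" using char_nz[OF c] .
  show ?thesis
  proof (cases "a \<ge> 0")
    case True
    then have "a = int (nat a)" by simp
    then have "\<chi> a = \<chi> 1 ^ nat a" using nat[of "nat a"] by simp
    also have "\<dots> = \<chi> 1 powi int (nat a)" by (rule power_int_of_nat[symmetric])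
    finally show ?thesis using \<open>a = int (nat a)\<close> by simp
  next
    case False
    then obtain n where a: "a = - int n" by (metis neg_0_le_iff_le nle_le nonneg_int_cases add.inverse_inverse)
    have "\<chi> (int n + a) = \<chi> (int n) * \<chi> a" by (rule mult)
    then have "\<chi> 0 = \<chi> 1 ^ n * \<chi> a" using a nat by simp
    then have "\<chi> a = inverse (\<chi> 1 ^ n)" using nz c0 by (simp add: field_simps)
    then show ?thesis using a by (simp add: power_int_minus)
  qed
qed

lemma powi_char: "w ^ N = 1 \<Longrightarrow> N > 0 \<Longrightarrow> (\<lambda>a. w powi a) \<in> chars N"
proof -
  assume w: "w ^ N = 1" "N > 0"
  then have nz: "w \<noteq> 0" by (cases "w = 0") (auto simp: power_0_left)
  show ?thesis unfolding chars_def
  proof (intro CollectI conjI allI)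
    show "w powi 0 = 1" by simp
    fix a b show "w powi (a + b) = w powi a * w powi b" using nz by (simp add: power_int_add)
  next
    fix a show "w powi (a + int N) = w powi a" using nz w by (simp add: power_int_add)
  qed
qed

definition chi_of :: "nat \<Rightarrow> nat \<Rightarrow> int \<Rightarrow> 'a" where
  "chi_of k i = (\<lambda>a. (\<zeta> k ^ i) powi a)"

lemma chars_eq: "chars (p ^ k) = chi_of k ` {..<p ^ k}"
proof
  show "chars (p ^ k) \<subseteq> chi_of k ` {..<p ^ k}"
  proof
    fix \<chi> :: "int \<Rightarrow> 'a" assume c: "\<chi> \<in> chars (p ^ k)"
    have "\<chi> (0 + int (p ^ k)) = \<chi> 0" using c unfolding chars_def by blast
    then have "\<chi> (int (p ^ k)) = \<chi> 0" by simp
    moreover have "\<chi> (int (p ^ k)) = \<chi> 1 powi int (p ^ k)" using char_pow[OF c] .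
    moreover have "\<chi> 1 powi int (p ^ k) = \<chi> 1 ^ (p ^ k)" by (rule power_int_of_nat)
    moreover have "\<chi> 0 = 1" using c unfolding chars_def by blast
    ultimately have "(\<chi> 1) ^ (p ^ k) = 1" by simp
    then obtain i where i: "i < p ^ k" "\<chi> 1 = \<zeta> k ^ i" using roots_all by blast
    have "\<chi> = chi_of k i" using char_pow[OF c] i by (auto simp: chi_of_def)
    then show "\<chi> \<in> chi_of k ` {..<p ^ k}" using i by blast
  qed
  show "chi_of k ` {..<p ^ k} \<subseteq> chars (p ^ k)"
  proof
    fix \<chi> assume "\<chi> \<in> chi_of k ` {..<p ^ k}"
    then obtain i where "\<chi> = chi_of k i" by blast
    moreover have "(\<zeta> k ^ i) ^ (p ^ k) = 1" using z_pow_pow .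
    ultimately show "\<chi> \<in> chars (p ^ k)" using powi_char[of "\<zeta> k ^ i" "p ^ k"] p_gt1 by (simp add: chi_of_def)
  qed
qed

lemma chi_of_inj: "inj_on (chi_of k) {..<p ^ k}"
proof (rule inj_onI)
  fix i j assume ij: "i \<in> {..<p ^ k}" "j \<in> {..<p ^ k}" "chi_of k i = chi_of k j"
  then have "chi_of k i 1 = chi_of k j 1" by simp
  then have "\<zeta> k ^ i = \<zeta> k ^ j" by (simp add: chi_of_def)
  then show "i = j" using z_inj ij by (auto dest: inj_onD)
qed

lemma sum_chars: "(\<Sum>\<chi>\<in>(chars (p ^ k) :: (int \<Rightarrow> 'a) set). F \<chi>) = (\<Sum>i<p ^ k. F (chi_of k i))"
  using sum.reindex[OF chi_of_inj, of F] chars_eq by simp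

lemma finite_chars: "finite (chars (p ^ k) :: (int \<Rightarrow> 'a) set)" by (simp add: chars_eq)

lemma key_sum:
  fixes z :: 'a and a :: nat
  assumes z: "z ^ (p ^ k) \<noteq> 1" and a: "a < p ^ k"
  shows "(\<Sum>i<p ^ k. (\<zeta> k ^ i) ^ (a + 1) / (z - \<zeta> k ^ i))
         = of_nat (p ^ k) * z ^ a / (z ^ (p ^ k) - 1)"
proof -
  let ?q = "p ^ k"
  have q: "?q > 0" using p_gt1 by simp
  have zw: "z - \<zeta> k ^ i \<noteq> 0" for i
  proof
    assume "z - \<zeta> k ^ i = 0"
    then have "z ^ ?q = (\<zeta> k ^ ?q) ^ i" by (simp add: pow_swap[of _ i])
    then show False using z z_pow by simp
  qed
  have zq: "z ^ ?q - 1 \<noteq> 0" using z by simp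
  have inv: "1 / (z - \<zeta> k ^ i) = (\<Sum>t<?q. (\<zeta> k ^ i) ^ (?q - Suc t) * z ^ t) / (z ^ ?q - 1)" for i
  proof -
    have "z ^ ?q - (\<zeta> k ^ i) ^ ?q = (z - \<zeta> k ^ i) * (\<Sum>t<?q. (\<zeta> k ^ i) ^ (?q - Suc t) * z ^ t)"
      by (rule power_diff_sumr2)
    moreover have "(\<zeta> k ^ i) ^ ?q = 1" using z_pow_pow .
    ultimately show ?thesis using zw[of i] zq by (simp add: field_simps)
  qed
  have "(\<Sum>i<?q. (\<zeta> k ^ i) ^ (a + 1) / (z - \<zeta> k ^ i))
      = (\<Sum>i<?q. (\<Sum>t<?q. z ^ t * (\<zeta> k ^ i) ^ (a + ?q - t))) / (z ^ ?q - 1)"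
  proof -
    have "(\<zeta> k ^ i) ^ (a + 1) / (z - \<zeta> k ^ i) = (\<Sum>t<?q. z ^ t * (\<zeta> k ^ i) ^ (a + ?q - t)) / (z ^ ?q - 1)" for i
    proof -
      have "(\<zeta> k ^ i) ^ (a + 1) / (z - \<zeta> k ^ i) = (\<zeta> k ^ i) ^ (a + 1) * (1 / (z - \<zeta> k ^ i))" by simp
      also have "\<dots> = (\<Sum>t<?q. (\<zeta> k ^ i) ^ (a + 1) * ((\<zeta> k ^ i) ^ (?q - Suc t) * z ^ t)) / (z ^ ?q - 1)"
        by (simp add: inv sum_distrib_left)
      also have "\<dots> = (\<Sum>t<?q. z ^ t * (\<zeta> k ^ i) ^ (a + ?q - t)) / (z ^ ?q - 1)"
      proof -
        have "(\<zeta> k ^ i) ^ (a + 1) * ((\<zeta> k ^ i) ^ (?q - Suc t) * z ^ t) = z ^ t * (\<zeta> k ^ i) ^ (a + ?q - t)"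
          if "t < ?q" for t
        proof -
          have "a + 1 + (?q - Suc t) = a + ?q - t" using that by simp
          then show ?thesis by (metis mult.commute mult.left_commute power_add)
        qed
        then show ?thesis by (intro arg_cong[where f = "\<lambda>x. x / _"] sum.cong) auto
      qed
      finally show ?thesis .
    qed
    then show ?thesis by (simp add: sum_divide_distrib)
  qed
  also have "(\<Sum>i<?q. (\<Sum>t<?q. z ^ t * (\<zeta> k ^ i) ^ (a + ?q - t)))
           = (\<Sum>t<?q. z ^ t * (\<Sum>i<?q. (\<zeta> k ^ i) ^ (a + ?q - t)))"
    by (subst sum.swap) (simp add: sum_distrib_left)
  also have "\<dots> = (\<Sum>t<?q. if t = a then z ^ t * of_nat ?q else 0)"
  proof (intro sum.cong refl)
    fix t assume t: "t \<in> {..<?q}"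
    have "?q dvd (a + ?q - t) \<longleftrightarrow> t = a"
    proof
      assume d: "?q dvd (a + ?q - t)"
      have "0 < a + ?q - t" "a + ?q - t < 2 * ?q" using t a by auto
      moreover obtain c where c: "a + ?q - t = ?q * c" using d by blast
      ultimately have "0 < c" "c < 2" by (auto simp: mult.commute)
      then have "c = 1" by simp
      then have "a + ?q - t = ?q" using c by simp
      then show "t = a" using t a by simp
    qed simp
    then show "z ^ t * (\<Sum>i<?q. (\<zeta> k ^ i) ^ (a + ?q - t)) = (if t = a then z ^ t * of_nat ?q else 0)"
      using orth[of k "a + ?q - t"] by auto
  qed
  also have "\<dots> = z ^ a * of_nat ?q" using a by (simp add: sum.delta)
  finally show ?thesis by (simp add: mult.commute)
qed

end

context vf begin

lemma consec_tail: "(\<And>j. ereal (b j) \<le> v (X (Suc j) - X j)) \<Longrightarrow> mono b \<Longrightarrow> i \<le> j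
   \<Longrightarrow> ereal (b i) \<le> v (X j - X i)"
proof -
  assume a: "\<And>j. ereal (b j) \<le> v (X (Suc j) - X j)" and mb: "mono b" and ij: "i \<le> j"
  show ?thesis using ij
  proof (induction j rule: dec_induct)
    case base then show ?case by simp
  next
    case (step j)
    have "i \<le> j" using step by simp
    then have "b i \<le> b j" using monoD[OF mb] by blast
    then have "ereal (b i) \<le> ereal (b j)" by simp
    also have "\<dots> \<le> v (X (Suc j) - X j)" using a[of j] .
    finally have "ereal (b i) \<le> v (X (Suc j) - X j)" .
    then have "ereal (b i) \<le> v ((X (Suc j) - X j) + (X j - X i))" using step(3) by (intro v_add_ge)
    then show ?case by simp
  qed
qed

end

definition fge :: "('a::field \<Rightarrow> ereal) \<Rightarrow> 'a fps \<Rightarrow> real \<Rightarrow> bool" where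
  "fge v f c \<longleftrightarrow> (\<forall>k. ereal c \<le> v (fps_nth f k))"

context vf begin

lemma fge_mult: "fge v A a \<Longrightarrow> fge v B b \<Longrightarrow> fge v (A * B) (a + b)"
proof -
  assume A: "fge v A a" and B: "fge v B b"
  show ?thesis unfolding fge_def fps_mult_nth
  proof (intro allI v_sum_ge)
    fix k i
    have "ereal (a + b) \<le> v (fps_nth A i) + v (fps_nth B (k - i))"
      using A B unfolding fge_def by (intro ereal_add_le) auto
    then show "ereal (a + b) \<le> v (fps_nth A i * fps_nth B (k - i))" by (simp add: v_mult)
  qed
qed

lemma fge_add: "fge v A c \<Longrightarrow> fge v B c \<Longrightarrow> fge v (A + B) c"
  unfolding fge_def by (auto intro: v_add_ge)

lemma fge_diff: "fge v A c \<Longrightarrow> fge v B c \<Longrightarrow> fge v (A - B) c"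
  unfolding fge_def by (auto intro: v_diff_ge)

lemma fge_uminus: "fge v A c \<Longrightarrow> fge v (- A) c"
  unfolding fge_def by auto

lemma fge_shift: "fge v A c \<Longrightarrow> fge v (fps_shift n A) c"
  unfolding fge_def by auto

lemma fge_mono: "fge v A c \<Longrightarrow> d \<le> c \<Longrightarrow> fge v A d"
  unfolding fge_def by (meson ereal_less_eq(3) order_trans)

lemma fge_zero: "(\<And>j. fge v A (real j)) \<Longrightarrow> A = 0"
proof -
  assume a: "\<And>j. fge v A (real j)"
  have "fps_nth A k = 0" for k
  proof (rule v_all_ge)
    fix M :: real
    have "ereal (real (nat \<lceil>M\<rceil>)) \<le> v (fps_nth A k)" using a unfolding fge_def by blast
    moreover have "ereal M \<le> ereal (real (nat \<lceil>M\<rceil>))" by simp linarith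
    ultimately show "ereal M \<le> v (fps_nth A k)" by (rule order_trans[rotated])
  qed
  then show ?thesis by (simp add: fps_ext)
qed

end

context vK begin

definition fpsR :: "'a fps \<Rightarrow> bool" where "fpsR f \<longleftrightarrow> (\<forall>k. fps_nth f k \<in> RR)"

lemma fpsR_fge: "fpsR f \<Longrightarrow> fge v f 0"
  unfolding fpsR_def fge_def by (auto simp: RR_iff zero_ereal_def)

lemma fpsR_mult: "fpsR A \<Longrightarrow> fpsR B \<Longrightarrow> fpsR (A * B)"
  unfolding fpsR_def fps_mult_nth by (auto intro!: RR_sum RR_mult)
lemma fpsR_add: "fpsR A \<Longrightarrow> fpsR B \<Longrightarrow> fpsR (A + B)"
  unfolding fpsR_def by (auto intro!: RR_add)
lemma fpsR_diff: "fpsR A \<Longrightarrow> fpsR B \<Longrightarrow> fpsR (A - B)"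
  unfolding fpsR_def by (auto intro!: RR_diff)
lemma fpsR_shift: "fpsR A \<Longrightarrow> fpsR (fps_shift n A)"
  unfolding fpsR_def by auto
lemma fpsR_1: "fpsR 1"
  unfolding fpsR_def by (auto simp: RR_0 RR_1 fps_one_nth)

lemma fpsR_inverse: "fpsR f \<Longrightarrow> v (fps_nth f 0) = 0 \<Longrightarrow> fpsR (inverse f)"
proof -
  assume f: "fpsR f" and f0: "v (fps_nth f 0) = 0"
  have nz: "fps_nth f 0 \<noteq> 0" using f0 by auto
  have one: "inverse f * f = 1" using inverse_mult_eq_1[OF nz] .
  let ?g = "inverse f"
  have f0K: "fps_nth f 0 \<in> K" using f unfolding fpsR_def RR_iff by blast
  have if0: "inverse (fps_nth f 0) \<in> RR" using RR_inverse[OF f0K f0] .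
  have "fps_nth ?g n \<in> RR" for n
  proof (induction n rule: less_induct)
    case (less n)
    show ?case
    proof (cases n)
      case 0
      have "fps_nth ?g 0 * fps_nth f 0 = 1" using arg_cong[OF one, of "\<lambda>h. fps_nth h 0"] by simp
      then have "fps_nth ?g 0 = inverse (fps_nth f 0)" using nz by (simp add: field_simps)
      then show ?thesis using 0 if0 by simp
    next
      case (Suc m)
      have "fps_nth (?g * f) n = 0" using one Suc by simp
      then have "(\<Sum>i=0..n. fps_nth ?g i * fps_nth f (n - i)) = 0" by (simp add: fps_mult_nth)
      moreover have "(\<Sum>i=0..n. fps_nth ?g i * fps_nth f (n - i))
          = (\<Sum>i<n. fps_nth ?g i * fps_nth f (n - i)) + fps_nth ?g n * fps_nth f 0"
        using Suc by (simp add: atLeast0AtMost lessThan_Suc_atMost[symmetric])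
      ultimately have "fps_nth ?g n = - (\<Sum>i<n. fps_nth ?g i * fps_nth f (n - i)) * inverse (fps_nth f 0)"
        using nz by (simp add: field_simps add_eq_0_iff)
      moreover have "(\<Sum>i<n. fps_nth ?g i * fps_nth f (n - i)) \<in> RR"
        using less f unfolding fpsR_def by (auto intro!: RR_sum RR_mult)
      ultimately show ?thesis using if0 by (simp add: RR_mult RR_uminus)
    qed
  qed
  then show ?thesis unfolding fpsR_def by blast
qed

end

locale vKp = vK +
  fixes \<pi> :: 'a and e :: nat
  assumes unif: "uniformizer v K \<pi>" and ram: "ram_index v \<pi> e"
begin

lemma e_pos: "e > 0" using ram unfolding ram_index_def by blast
lemma v_pi: "v \<pi> = ereal (1 / real e)" using ram unfolding ram_index_def by blast
lemma pi_K: "\<pi> \<in> K" using unif unfolding uniformizer_def by blast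
lemma pi_nz: "\<pi> \<noteq> 0" using v_pi by auto
lemma pi_RR: "\<pi> \<in> RR" using pi_K v_pi e_pos by (simp add: RR_iff)
lemma unif_ge: "x \<in> K \<Longrightarrow> 0 < v x \<Longrightarrow> ereal (1 / real e) \<le> v x"
  using unif v_pi unfolding uniformizer_def by auto

lemma v_pi_pow: "v (\<pi> ^ j) = ereal (real j / real e)"
  using v_power[OF v_pi, of j] by simp

lemma wf_props:
  assumes wf: "weierstrass_fact RR \<pi> f mu lam"
  shows "\<forall>k. ereal (real mu / real e) \<le> v (fps_nth f k)"
    and "v (fps_nth f lam) = ereal (real mu / real e)"
    and "\<forall>k<lam. ereal ((real mu + 1) / real e) \<le> v (fps_nth f k)"
proof -
  obtain g u w where gu: "in_RT RR u" "in_RT RR w" "u * w = 1" "degree g = lam" "lead_coeff g = 1"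
    "\<forall>i<lam. \<exists>r\<in>RR. coeff g i = \<pi> * r" "f = fps_const (\<pi> ^ mu) * fps_of_poly g * u"
    using wf unfolding weierstrass_fact_def by blast
  have uR: "fps_nth u k \<in> RR" for k using gu(1) unfolding in_RT_def by blast
  have wR: "fps_nth w k \<in> RR" for k using gu(2) unfolding in_RT_def by blast
  have gl: "ereal (1 / real e) \<le> v (coeff g i)" if il: "i < lam" for i
  proof -
    obtain r where r: "r \<in> RR" "coeff g i = \<pi> * r" using gu(6) il by blast
    have "ereal (1 / real e + 0) \<le> v \<pi> + v r" using r v_pi by (intro ereal_add_le) (auto simp: RR_iff zero_ereal_def)
    then show ?thesis using r by (simp add: v_mult)
  qed
  have g0: "0 \<le> v (coeff g i)" for i
  proof (cases "i < lam")
    case True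
    have "(0::ereal) \<le> ereal (1 / real e)" by simp
    also have "\<dots> \<le> v (coeff g i)" using gl[OF True] .
    finally show ?thesis .
  next
    case False
    then have "i = lam \<or> i > lam" by auto
    then show ?thesis using gu(4,5) by (auto simp: coeff_eq_0)
  qed
  have u0: "v (fps_nth u 0) = 0"
  proof -
    have "fps_nth u 0 * fps_nth w 0 = 1" using arg_cong[OF gu(3), of "\<lambda>h. fps_nth h 0"] by simp
    then have "v (fps_nth u 0) + v (fps_nth w 0) = 0" using v_mult by (metis v1)
    moreover have "0 \<le> v (fps_nth u 0)" "0 \<le> v (fps_nth w 0)" using uR wR by (auto simp: RR_iff)
    moreover have "fps_nth u 0 \<noteq> 0" "fps_nth w 0 \<noteq> 0"
      using \<open>fps_nth u 0 * fps_nth w 0 = 1\<close> by auto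
    then obtain a b where "v (fps_nth u 0) = ereal a" "v (fps_nth w 0) = ereal b" using v_fin by metis
    ultimately show ?thesis by (simp add: zero_ereal_def)
  qed
  let ?h = "fps_of_poly g * u"
  have hnth: "fps_nth ?h k = (\<Sum>i=0..k. coeff g i * fps_nth u (k - i))" for k
    by (simp add: fps_mult_nth fps_of_poly_nth)
  have fk: "fps_nth f k = \<pi> ^ mu * fps_nth ?h k" for k
    using gu(7) by (simp add: mult.assoc fps_mult_left_const_nth)
  have h0: "0 \<le> v (fps_nth ?h k)" for k
    unfolding hnth using g0 uR by (auto intro!: v_sum_ge simp: v_mult RR_iff)
  have hlow: "ereal (1 / real e) \<le> v (fps_nth ?h k)" if "k < lam" for k
    unfolding hnth
  proof (rule v_sum_ge)
    fix i assume "i \<in> {0..k}"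
    then have "i < lam" using that by simp
    then have "ereal (1 / real e + 0) \<le> v (coeff g i) + v (fps_nth u (k - i))"
      using gl uR by (intro ereal_add_le) (auto simp: RR_iff zero_ereal_def)
    then show "ereal (1 / real e) \<le> v (coeff g i * fps_nth u (k - i))" by (simp add: v_mult)
  qed
  have hlam: "v (fps_nth ?h lam) = 0"
  proof -
    have "fps_nth ?h lam = fps_nth u 0 + (\<Sum>i<lam. coeff g i * fps_nth u (lam - i))"
    proof -
      have "(\<Sum>i=0..lam. coeff g i * fps_nth u (lam - i))
          = (\<Sum>i<lam. coeff g i * fps_nth u (lam - i)) + coeff g lam * fps_nth u 0"
        by (simp add: atLeast0AtMost lessThan_Suc_atMost[symmetric])
      moreover have "coeff g lam = 1" using gu(4,5) by simp
      ultimately show ?thesis unfolding hnth by simp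
    qed
    moreover have "v (fps_nth u 0) < v (\<Sum>i<lam. coeff g i * fps_nth u (lam - i))"
    proof -
      have "ereal (1 / real e) \<le> v (\<Sum>i<lam. coeff g i * fps_nth u (lam - i))"
      proof (rule v_sum_ge)
        fix i assume "i \<in> {..<lam}"
        then have "ereal (1 / real e + 0) \<le> v (coeff g i) + v (fps_nth u (lam - i))"
          using gl uR by (intro ereal_add_le) (auto simp: RR_iff zero_ereal_def)
        then show "ereal (1 / real e) \<le> v (coeff g i * fps_nth u (lam - i))" by (simp add: v_mult)
      qed
      moreover have "v (fps_nth u 0) < ereal (1 / real e)" using u0 e_pos by (simp add: zero_ereal_def)
      ultimately show ?thesis by simp
    qed
    ultimately show ?thesis using v_add_strict u0 by simp
  qed
  have vf: "v (fps_nth f k) = ereal (real mu / real e) + v (fps_nth ?h k)" for k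
    using fk v_mult v_pi_pow by simp
  show "\<forall>k. ereal (real mu / real e) \<le> v (fps_nth f k)"
  proof
    fix k
    have "ereal (real mu / real e + 0) \<le> ereal (real mu / real e) + v (fps_nth ?h k)"
      using h0 by (intro ereal_add_le) (auto simp: zero_ereal_def)
    then show "ereal (real mu / real e) \<le> v (fps_nth f k)" using vf by simp
  qed
  show "v (fps_nth f lam) = ereal (real mu / real e)" using vf hlam by simp
  show "\<forall>k<lam. ereal ((real mu + 1) / real e) \<le> v (fps_nth f k)"
  proof (intro allI impI)
    fix k assume "k < lam"
    have "ereal (real mu / real e + 1 / real e) \<le> ereal (real mu / real e) + v (fps_nth ?h k)"
      using hlow[OF \<open>k < lam\<close>] by (intro ereal_add_le) auto
    then show "ereal ((real mu + 1) / real e) \<le> v (fps_nth f k)" using vf by (simp add: add_divide_distrib)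
  qed
qed

lemma wf_unique:
  assumes w1: "weierstrass_fact RR \<pi> f mu lam" and w2: "weierstrass_fact RR \<pi> f mu' lam'"
  shows "mu = mu' \<and> lam = lam'"
proof -
  note a = wf_props[OF w1] and b = wf_props[OF w2]
  have ee: "real e > 0" using e_pos by simp
  have "\<not> mu < mu'" if "weierstrass_fact RR \<pi> f mu lam" "weierstrass_fact RR \<pi> f mu' lam'" for mu lam mu' lam'
  proof
    assume "mu < mu'"
    then have "real mu / real e < real mu' / real e" using ee by (simp add: divide_strict_right_mono)
    moreover have "ereal (real mu' / real e) \<le> ereal (real mu / real e)"
      using wf_props(1)[OF that(2)] wf_props(2)[OF that(1)] by metis
    ultimately show False by simp
  qed
  then have mu: "mu = mu'" using w1 w2 by (meson nat_neq_iff)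
  have "\<not> lam < lam'" if "weierstrass_fact RR \<pi> f mu lam" "weierstrass_fact RR \<pi> f mu lam'" for lam lam'
  proof
    assume "lam < lam'"
    then have "ereal ((real mu + 1) / real e) \<le> ereal (real mu / real e)"
      using wf_props(3)[OF that(2)] wf_props(2)[OF that(1)] by metis
    moreover have "real mu / real e < (real mu + 1) / real e" using ee by (simp add: divide_strict_right_mono)
    ultimately show False by simp
  qed
  then have "lam = lam'" using w1 w2 mu by (meson nat_neq_iff)
  with mu show ?thesis by simp
qed

lemma weier_vals:
  assumes w: "weierstrass_fact RR \<pi> f mu lam" and f: "f \<noteq> 0"
  shows "weier_mu RR \<pi> f = enat mu" and "weier_lambda RR \<pi> f = lam"
proof -
  have "(THE mu. \<exists>lam. weierstrass_fact RR \<pi> f mu lam) = mu"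
    using w wf_unique by (intro the_equality) blast+
  then show "weier_mu RR \<pi> f = enat mu" using f unfolding weier_mu_def by simp
  have "(THE lam. \<exists>mu. weierstrass_fact RR \<pi> f mu lam) = lam"
    using w wf_unique by (intro the_equality) blast+
  then show "weier_lambda RR \<pi> f = lam" using f unfolding weier_lambda_def by simp
qed

end

context vKp begin

lemma fpsR_K: "fpsR f \<Longrightarrow> fps_nth f k \<in> K" unfolding fpsR_def RR_iff by blast

lemma val_unit: "x \<in> RR \<Longrightarrow> v x < ereal (1 / real e) \<Longrightarrow> v x = 0"
proof -
  assume x: "x \<in> RR" "v x < ereal (1 / real e)"
  have "\<not> 0 < v x"
  proof
    assume "0 < v x"
    then have "ereal (1 / real e) \<le> v x" using unif_ge x(1) by (simp add: RR_iff)
    then show False using x(2) by simp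
  qed
  then show ?thesis using x(1) by (simp add: RR_iff)
qed

lemma v_div_pi: "v (x / \<pi> ^ j) = v x - ereal (real j / real e)"
  using v_divide[of "\<pi> ^ j" x] pi_nz v_pi_pow by simp

lemma ereal_le_minus: "ereal (a + b) \<le> x \<Longrightarrow> ereal a \<le> x - ereal b"
  by (cases x) auto

lemma ereal_less_minus: "x < ereal (a + b) \<Longrightarrow> x - ereal b < ereal a"
  by (cases x) auto

lemma weier_exists:
  assumes f: "fpsR f" and nz: "f \<noteq> 0"
  shows "\<exists>mu lam. weierstrass_fact RR \<pi> f mu lam"
proof -
  have ee: "real e > 0" using e_pos by simp
  define S where "S = {j::nat. \<exists>k. v (fps_nth f k) < ereal ((real j + 1) / real e)}"
  obtain k0 where k0: "fps_nth f k0 \<noteq> 0" using nz by (metis fps_ext fps_zero_nth)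
  obtain r where r: "v (fps_nth f k0) = ereal r" using v_fin[OF k0] by blast
  define j0 where "j0 = nat \<lceil>r * real e\<rceil>"
  have "r * real e < real j0 + 1" unfolding j0_def by linarith
  then have "r < (real j0 + 1) / real e" using ee by (simp add: field_simps)
  then have "v (fps_nth f k0) < ereal ((real j0 + 1) / real e)" using r by simp
  then have "j0 \<in> S" unfolding S_def by blast
  define mu where "mu = (LEAST j. j \<in> S)"
  have muS: "mu \<in> S" unfolding mu_def using \<open>j0 \<in> S\<close> by (rule LeastI)
  have mu_le: "ereal (real mu / real e) \<le> v (fps_nth f k)" for k
  proof (cases mu)
    case 0 then show ?thesis using f unfolding fpsR_def by (simp add: RR_iff zero_ereal_def)
  next
    case (Suc j)
    then have "j \<notin> S" unfolding mu_def using not_less_Least by (metis lessI)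
    then have "\<not> v (fps_nth f k) < ereal ((real j + 1) / real e)" unfolding S_def by blast
    then show ?thesis using Suc by (simp add: not_less add.commute)
  qed
  define F where "F = Abs_fps (\<lambda>k. fps_nth f k / \<pi> ^ mu)"
  have Fnth: "fps_nth F k = fps_nth f k / \<pi> ^ mu" for k unfolding F_def by simp
  have vF: "v (fps_nth F k) = v (fps_nth f k) - ereal (real mu / real e)" for k
    unfolding Fnth by (rule v_div_pi)
  have FR: "fpsR F" unfolding fpsR_def
  proof
    fix k
    have "fps_nth F k \<in> K" unfolding Fnth using fpsR_K[OF f] pi_K by (intro K_divide K_power)
    moreover have "ereal 0 \<le> v (fps_nth F k)" unfolding vF using mu_le[of k] by (intro ereal_le_minus) simp
    ultimately show "fps_nth F k \<in> RR" by (simp add: RR_iff zero_ereal_def)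
  qed
  have fF: "f = fps_const (\<pi> ^ mu) * F"
    by (rule fps_ext) (simp add: fps_mult_left_const_nth Fnth pi_nz)
  have exk: "\<exists>k. v (fps_nth F k) < ereal (1 / real e)"
  proof -
    obtain k where "v (fps_nth f k) < ereal ((real mu + 1) / real e)" using muS unfolding S_def by blast
    then have "v (fps_nth f k) < ereal (1 / real e + real mu / real e)" by (simp add: add_divide_distrib add.commute)
    then show ?thesis unfolding vF by (blast dest: ereal_less_minus)
  qed
  define lam where "lam = (LEAST k. v (fps_nth F k) < ereal (1 / real e))"
  have Flam: "v (fps_nth F lam) = 0"
  proof -
    have "v (fps_nth F lam) < ereal (1 / real e)" unfolding lam_def using exk by (rule LeastI_ex)
    then show ?thesis using FR val_unit unfolding fpsR_def by blast
  qed
  have Flow: "ereal (1 / real e) \<le> v (fps_nth F k)" if "k < lam" for k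
    using not_less_Least[OF that[unfolded lam_def]] by (simp add: lam_def)
  define H where "H = fps_shift lam F"
  have H0: "v (fps_nth H 0) = 0" unfolding H_def using Flam by simp
  have HR: "fpsR H" unfolding H_def using FR by (rule fpsR_shift)
  have H0nz: "fps_nth H 0 \<noteq> 0" using H0 by auto
  define Hi where "Hi = inverse H"
  have HiR: "fpsR Hi" unfolding Hi_def using fpsR_inverse[OF HR H0] .
  have HHi: "H * Hi = 1" unfolding Hi_def using inverse_mult_eq_1'[OF H0nz] .
  define P where "P = Abs_fps (\<lambda>k. if k < lam then fps_nth F k else 0)"
  have PR: "fpsR P" using FR RR_0 unfolding P_def fpsR_def by auto
  have Pge: "fge v P (1 / real e)" unfolding fge_def P_def using Flow by auto
  have FPH: "F = P + fps_X ^ lam * H"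
    by (rule fps_ext) (simp add: P_def H_def fps_X_power_mult_nth)
  define qs where "qs = rec_nat Hi (\<lambda>j q. Hi * (1 - fps_shift lam (q * P)))"
  have qs0: "qs 0 = Hi" unfolding qs_def by simp
  have qsS: "qs (Suc j) = Hi * (1 - fps_shift lam (qs j * P))" for j unfolding qs_def by simp
  have qsR: "fpsR (qs j)" for j
    by (induction j) (auto simp: qs0 qsS HiR PR intro!: fpsR_mult fpsR_diff fpsR_1 fpsR_shift)
  have Hi0: "fge v Hi 0" using fpsR_fge[OF HiR] .
  have key: "fge v (Hi * fps_shift lam (A * P)) (a + 1 / real e)" if "fge v A a" for A a
  proof -
    have "fge v (Hi * fps_shift lam (A * P)) (0 + (a + 1 / real e))"
      by (intro fge_mult Hi0 fge_shift fge_mult[OF that Pge])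
    then show ?thesis by simp
  qed
  have diff: "fge v (qs (Suc j) - qs j) ((real j + 1) / real e)" for j
  proof (induction j)
    case 0
    have "qs (Suc 0) - qs 0 = - (Hi * fps_shift lam (Hi * P))"
      by (simp only: qs0 qsS right_diff_distrib mult_1_right) simp
    moreover have "fge v (Hi * fps_shift lam (Hi * P)) (0 + 1 / real e)" using key[OF Hi0] .
    ultimately show ?case by (simp add: fge_uminus)
  next
    case (Suc j)
    have e1: "qs (Suc (Suc j)) = Hi * (1 - fps_shift lam (qs (Suc j) * P))" by (rule qsS)
    have e2: "qs (Suc j) = Hi * (1 - fps_shift lam (qs j * P))" by (rule qsS)
    have "qs (Suc (Suc j)) - qs (Suc j) = Hi * (fps_shift lam (qs j * P) - fps_shift lam (qs (Suc j) * P))"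
      by (subst e1, subst (2) e2) (simp add: algebra_simps)
    also have "\<dots> = Hi * fps_shift lam (qs j * P - qs (Suc j) * P)" by (simp only: fps_shift_diff)
    also have "qs j * P - qs (Suc j) * P = - ((qs (Suc j) - qs j) * P)" by (simp add: algebra_simps)
    finally have "qs (Suc (Suc j)) - qs (Suc j) = - (Hi * fps_shift lam ((qs (Suc j) - qs j) * P))"
      by (simp only: fps_shift_uminus mult_minus_right)
    moreover have "fge v (Hi * fps_shift lam ((qs (Suc j) - qs j) * P)) ((real j + 1) / real e + 1 / real e)"
      using key[OF Suc] .
    ultimately show ?case by (simp add: fge_uminus add_divide_distrib)
  qed
  have bmono: "mono (\<lambda>j::nat. (real j + 1) / real e)"
    using ee by (intro monoI) (simp add: divide_right_mono)
  have bunb: "\<exists>N. M \<le> (real N + 1) / real e" for M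
  proof -
    have "M * real e \<le> real (nat \<lceil>M * real e\<rceil>) + 1" by linarith
    then have "M \<le> (real (nat \<lceil>M * real e\<rceil>) + 1) / real e" using ee by (simp add: field_simps)
    then show ?thesis by blast
  qed
  have cons: "ereal ((real j + 1) / real e) \<le> v (fps_nth (qs (Suc j)) k - fps_nth (qs j) k)" for j k
    using diff[of j] unfolding fge_def by simp
  have exq: "\<exists>c. vconv v (\<lambda>j. fps_nth (qs j) k) c" for k
    by (rule vconv_consec[of "\<lambda>j. (real j + 1) / real e" "\<lambda>j. fps_nth (qs j) k", OF cons bunb bmono])
  define q where "q = Abs_fps (\<lambda>k. SOME c. vconv v (\<lambda>j. fps_nth (qs j) k) c)"
  have qconv: "vconv v (\<lambda>j. fps_nth (qs j) k) (fps_nth q k)" for k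
    unfolding q_def using someI_ex[OF exq[of k]] by simp
  have qR: "fpsR q" unfolding fpsR_def
  proof
    fix k
    have "\<forall>n. fps_nth (qs n) k \<in> RR" using qsR unfolding fpsR_def by blast
    then show "fps_nth q k \<in> RR" using RR_closed[unfolded vclosed_def, rule_format, OF _ qconv[of k]] by blast
  qed
  have qtail: "fge v (q - qs j) ((real j + 1) / real e)" for j
    unfolding fge_def
  proof
    fix k
    have cv: "vconv v (\<lambda>i. fps_nth (qs i) k - fps_nth (qs j) k) (fps_nth q k - fps_nth (qs j) k)"
      by (intro vconv_diff qconv vconv_const)
    have "ereal ((real j + 1) / real e) \<le> v (fps_nth q k - fps_nth (qs j) k)"
      by (rule vconv_ge[OF cv, of j]) (rule consec_tail[OF cons bmono])
    then show "ereal ((real j + 1) / real e) \<le> v (fps_nth (q - qs j) k)" by simp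
  qed
  have fixpt: "q = Hi * (1 - fps_shift lam (q * P))"
  proof -
    define D where "D = q - Hi * (1 - fps_shift lam (q * P))"
    have D: "fge v D ((real j + 1) / real e)" for j
    proof -
      have "Hi * fps_shift lam ((q - qs j) * P) = Hi * fps_shift lam (q * P) - Hi * fps_shift lam (qs j * P)"
        by (simp add: algebra_simps fps_shift_diff)
      then have "D = (q - qs (Suc j)) + Hi * fps_shift lam ((q - qs j) * P)"
        unfolding D_def qsS by (simp add: algebra_simps)
      moreover have "fge v (q - qs (Suc j)) ((real j + 1) / real e)"
        by (rule fge_mono[OF qtail[of "Suc j"]]) (use ee in \<open>simp add: divide_right_mono\<close>)
      moreover have "fge v (Hi * fps_shift lam ((q - qs j) * P)) ((real j + 1) / real e)"
        by (rule fge_mono[OF key[OF qtail[of j]]]) (use ee in simp)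
      ultimately show ?thesis by (simp add: fge_add)
    qed
    have "fge v D (real j)" for j
    proof -
      have "fge v D ((real (j * e) + 1) / real e)" by (rule D)
      moreover have "real j \<le> (real (j * e) + 1) / real e" using ee by (simp add: field_simps)
      ultimately show ?thesis by (rule fge_mono)
    qed
    then have "D = 0" by (rule fge_zero)
    then show ?thesis unfolding D_def by simp
  qed
  have Hq: "H * q = 1 - fps_shift lam (q * P)"
  proof -
    have "H * q = (H * Hi) * (1 - fps_shift lam (q * P))" by (subst fixpt) (simp add: mult.assoc)
    then show ?thesis using HHi by simp
  qed
  have qF: "fps_shift lam (q * F) = 1"
  proof -
    have "q * F = q * P + (q * H) * fps_X ^ lam" unfolding FPH by (simp add: algebra_simps)
    then have "fps_shift lam (q * F) = fps_shift lam (q * P) + q * H"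
      by (simp add: fps_shift_add fps_shift_times_fps_X_power')
    then show ?thesis using Hq by (simp add: mult.commute)
  qed
  have qFlow: "fps_nth (q * F) k = fps_nth (q * P) k" if "k < lam" for k
  proof -
    have "q * F = q * P + fps_X ^ lam * (q * H)" unfolding FPH by (simp add: algebra_simps)
    then show ?thesis using that by (simp add: fps_X_power_mult_nth)
  qed
  have qFlam: "fps_nth (q * F) lam = 1"
    using arg_cong[OF qF, of "\<lambda>h. fps_nth h 0"] by simp
  have qFhigh: "fps_nth (q * F) k = 0" if "k > lam" for k
  proof -
    have "fps_nth (fps_shift lam (q * F)) (k - lam) = 0" using qF that by simp
    then show ?thesis using that by simp
  qed
  define c where "c i = fps_nth (q * F) i" for i
  define g where "g = monom 1 lam + (\<Sum>i<lam. monom (c i) i)"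
  have cg: "coeff g i = (if i = lam then 1 else if i < lam then c i else 0)" for i
  proof -
    have "coeff (\<Sum>j<lam. monom (c j) j) i = (\<Sum>j<lam. if j = i then c j else 0)"
      by (simp add: coeff_sum coeff_monom)
    also have "\<dots> = (if i < lam then c i else 0)" by (simp add: sum.delta')
    finally show ?thesis unfolding g_def by (auto simp: coeff_monom)
  qed
  have degg: "degree g = lam"
  proof (rule antisym)
    show "degree g \<le> lam" by (rule degree_le) (auto simp: cg)
    show "lam \<le> degree g" by (rule le_degree) (simp add: cg)
  qed
  have leadg: "lead_coeff g = 1" using degg cg by simp
  have gfps: "fps_of_poly g = q * F"
  proof (rule fps_ext)
    fix k
    show "fps_nth (fps_of_poly g) k = fps_nth (q * F) k"
      unfolding fps_of_poly_nth cg c_def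
      using qFlam qFhigh by (cases "k < lam"; cases "k = lam") auto
  qed
  have glow: "\<exists>r\<in>RR. coeff g i = \<pi> * r" if "i < lam" for i
  proof -
    have ci: "c i = fps_nth (q * P) i" unfolding c_def using qFlow[OF that] .
    have cK: "c i \<in> K" unfolding c_def using fpsR_K[OF fpsR_mult[OF qR FR]] .
    have "fge v (q * P) (0 + 1 / real e)" using fpsR_fge[OF qR] Pge by (rule fge_mult)
    then have cv: "ereal (1 / real e) \<le> v (c i)" unfolding ci fge_def by simp
    define r where "r = c i / \<pi>"
    have "r \<in> K" unfolding r_def using cK pi_K by (rule K_divide)
    moreover have "v r = v (c i) - ereal (1 / real e)" unfolding r_def using v_div_pi[of "c i" 1] by simp
    then have "ereal 0 \<le> v r" using cv by (simp add: ereal_le_minus)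
    ultimately have "r \<in> RR" by (simp add: RR_iff zero_ereal_def)
    moreover have "coeff g i = \<pi> * r" using that pi_nz by (simp add: cg r_def)
    ultimately show ?thesis by blast
  qed
  have q0: "v (fps_nth q 0) = 0"
  proof -
    have Hi0v: "v (fps_nth Hi 0) = 0"
    proof -
      have "fps_nth H 0 * fps_nth Hi 0 = 1" using arg_cong[OF HHi, of "\<lambda>h. fps_nth h 0"] by simp
      then have "v (fps_nth H 0) + v (fps_nth Hi 0) = 0" by (metis v1 v_mult)
      then show ?thesis using H0 by simp
    qed
    have "ereal ((real 0 + 1) / real e) \<le> v (fps_nth (q - qs 0) 0)" using qtail[of 0] unfolding fge_def by blast
    moreover have "v (fps_nth Hi 0) < ereal ((real 0 + 1) / real e)" using Hi0v ee by (simp add: zero_ereal_def)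
    ultimately have "v (fps_nth Hi 0) < v (fps_nth (q - qs 0) 0)" by (rule order_less_le_trans[rotated])
    then have "v (fps_nth Hi 0 + fps_nth (q - qs 0) 0) = 0" using v_add_strict Hi0v by simp
    then show ?thesis by (simp add: qs0)
  qed
  have q0nz: "fps_nth q 0 \<noteq> 0" using q0 by auto
  define u where "u = inverse q"
  have uR: "fpsR u" unfolding u_def using fpsR_inverse[OF qR q0] .
  have uq: "u * q = 1" unfolding u_def using inverse_mult_eq_1[OF q0nz] .
  have feq: "f = fps_const (\<pi> ^ mu) * fps_of_poly g * u"
  proof -
    have "fps_const (\<pi> ^ mu) * fps_of_poly g * u = fps_const (\<pi> ^ mu) * F * (u * q)"
      unfolding gfps by (simp add: algebra_simps)
    also have "\<dots> = f" using uq fF by simp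
    finally show ?thesis by (rule sym)
  qed
  have "weierstrass_fact RR \<pi> f mu lam"
    unfolding weierstrass_fact_def
    using uR qR uq degg leadg glow feq unfolding in_RT_def fpsR_def by blast
  then show ?thesis by blast
qed

end

lemma digit_val_Suc: "digit_val p m (Suc n) a = digit_val p m n a + nat (a (Suc n)) * p ^ (m * n)"
  unfolding digit_val_def by simp

lemma digit_val_cong: "(\<And>i. i \<in> {1..n} \<Longrightarrow> a i = b i) \<Longrightarrow> digit_val p m n a = digit_val p m n b"
  unfolding digit_val_def by (intro sum.cong) auto

lemma digit_val_bound:
  assumes "\<And>i. i \<in> {1..n} \<Longrightarrow> 0 \<le> a i \<and> a i < int (p ^ m)"
  shows "digit_val p m n a < p ^ (m * n)"
  using assms
proof (induction n)
  case 0 then show ?case by (simp add: digit_val_def)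
next
  case (Suc n)
  have IH: "digit_val p m n a < p ^ (m * n)" using Suc by auto
  have "nat (a (Suc n)) < p ^ m" using Suc.prems[of "Suc n"] by (simp add: nat_less_iff)
  then have "nat (a (Suc n)) \<le> p ^ m - 1" by simp
  then have "nat (a (Suc n)) * p ^ (m * n) \<le> (p ^ m - 1) * p ^ (m * n)" by (rule mult_right_mono) simp
  moreover have "(p ^ m - 1) * p ^ (m * n) + p ^ (m * n) = p ^ (m * Suc n)"
  proof -
    have "p ^ m \<ge> 1" using \<open>nat (a (Suc n)) < p ^ m\<close> by simp
    then have "(p ^ m - 1) * p ^ (m * n) + p ^ (m * n) = p ^ m * p ^ (m * n)"
      by (simp add: diff_mult_distrib)
    then show ?thesis by (simp add: power_add[symmetric])
  qed
  ultimately show ?case using IH digit_val_Suc[of p m n a] by linarith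
qed

lemma digit_val_split:
  assumes "n \<le> n'"
  shows "\<exists>t. digit_val p m n' a = digit_val p m n a + p ^ (m * n) * t"
  using assms
proof (induction n' rule: dec_induct)
  case base then show ?case by (intro exI[of _ 0]) simp
next
  case (step n')
  then obtain t where t: "digit_val p m n' a = digit_val p m n a + p ^ (m * n) * t" by blast
  have "m * n' = m * n + m * (n' - n)" using step(1) by (simp add: diff_mult_distrib2)
  then have "p ^ (m * n') = p ^ (m * n) * p ^ (m * (n' - n))" by (metis power_add)
  then have "digit_val p m (Suc n') a = digit_val p m n a + p ^ (m * n) * (t + nat (a (Suc n')) * p ^ (m * (n' - n)))"
    using t by (simp add: digit_val_Suc algebra_simps)
  then show ?case by blast
qed

lemma digit_val_mod:
  assumes "n \<le> n'" "M \<le> m * n"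
  shows "digit_val p m n' a mod p ^ M = digit_val p m n a mod p ^ M"
proof -
  obtain t where t: "digit_val p m n' a = digit_val p m n a + p ^ (m * n) * t"
    using digit_val_split[OF assms(1)] by blast
  have "p ^ M dvd p ^ (m * n)" using assms(2) by (simp add: le_imp_power_dvd)
  then show ?thesis using t by (metis dvd_mult2 mod_mult_self2 mult.commute dvd_def mult.assoc)
qed

lemma digit_val_inj:
  assumes "a \<in> digits p m n" "b \<in> digits p m n" "digit_val p m n a = digit_val p m n b"
  shows "a = b"
  using assms
proof (induction n arbitrary: a b)
  case 0 then show ?case by (simp add: digits_def)
next
  case (Suc n)
  let ?a = "restrict a {1..n}" and ?b = "restrict b {1..n}"
  have ra: "?a \<in> digits p m n" using Suc.prems(1) unfolding digits_def by auto
  have rb: "?b \<in> digits p m n" using Suc.prems(2) unfolding digits_def by auto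
  have bd: "digit_val p m n x < p ^ (m * n)" if "x \<in> digits p m (Suc n)" for x
    using that unfolding digits_def by (intro digit_val_bound) auto
  have da: "digit_val p m n ?a = digit_val p m n a" by (rule digit_val_cong) simp
  have db: "digit_val p m n ?b = digit_val p m n b" by (rule digit_val_cong) simp
  let ?x = "digit_val p m (Suc n) a"
  have pz: "p ^ (m * n) \<noteq> 0" using bd[OF Suc.prems(1)] by (metis not_less0 zero_less_iff_neq_zero)
  have "?x mod p ^ (m * n) = digit_val p m n a" "?x div p ^ (m * n) = nat (a (Suc n))"
    using bd[OF Suc.prems(1)] digit_val_Suc[of p m n a] pz by (auto simp: div_mult_self1)
  moreover have "?x mod p ^ (m * n) = digit_val p m n b" "?x div p ^ (m * n) = nat (b (Suc n))"
    using bd[OF Suc.prems(2)] digit_val_Suc[of p m n b] Suc.prems(3) pz by (auto simp: div_mult_self1)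
  ultimately have eqn: "digit_val p m n a = digit_val p m n b" and last: "nat (a (Suc n)) = nat (b (Suc n))"
    by auto
  have "?a = ?b" by (rule Suc.IH[OF ra rb]) (simp only: da db eqn)
  moreover have "a (Suc n) = b (Suc n)"
  proof -
    have "a (Suc n) \<ge> 0" "b (Suc n) \<ge> 0" using Suc.prems(1,2) unfolding digits_def by (auto simp: PiE_iff)
    then show ?thesis using last by simp
  qed
  ultimately show ?case using Suc.prems(1,2) unfolding digits_def
    by (intro PiE_ext[of _ "{1..Suc n}" "\<lambda>_. {0..<int (p ^ m)}"]) (auto simp: fun_eq_iff le_Suc_eq restrict_def split: if_splits)
qed

locale setting = vKp p v K \<pi> e + vz p v \<zeta> for p v K \<pi> e \<zeta> +
  fixes m :: nat and G :: "nat \<Rightarrow> ('g, 'b) monoid_scheme" and \<rho> :: "nat \<Rightarrow> 'g \<Rightarrow> int"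
    and \<nu> :: "nat set \<Rightarrow> (nat \<Rightarrow> 'g) \<Rightarrow> 'a"
  assumes m1: "1 \<le> m"
    and Gfin: "\<And>n. 1 \<le> n \<Longrightarrow> comm_group (G n) \<and> finite (carrier (G n))"
    and rho: "\<And>n. 1 \<le> n \<Longrightarrow> \<rho> n \<in> hom (G n) (integer_mod_group (p ^ m)) \<and>
                          \<rho> n ` carrier (G n) = carrier (integer_mod_group (p ^ m))"
    and nu: "hor_elem RR G \<nu>"
begin

definition PG :: "nat \<Rightarrow> (nat \<Rightarrow> 'g) set" where "PG n = PiE {1..n} (\<lambda>i. carrier (G i))"
definition rv :: "nat \<Rightarrow> (nat \<Rightarrow> 'g) \<Rightarrow> nat \<Rightarrow> int" where "rv n g = restrict (\<lambda>i. \<rho> i (g i)) {1..n}"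
definition rn :: "nat \<Rightarrow> (nat \<Rightarrow> int) \<Rightarrow> 'a" where "rn = push_dig G \<rho> \<nu>"

lemma PG_finite: "finite (PG n)"
  unfolding PG_def using Gfin by (intro finite_PiE) auto

lemma rho_range: "1 \<le> i \<Longrightarrow> x \<in> carrier (G i) \<Longrightarrow> 0 \<le> \<rho> i x \<and> \<rho> i x < int (p ^ m)"
proof -
  assume i: "1 \<le> i" and x: "x \<in> carrier (G i)"
  have "\<rho> i \<in> carrier (G i) \<rightarrow> carrier (integer_mod_group (p ^ m))"
    using rho[OF i] unfolding hom_def by blast
  then have "\<rho> i x \<in> carrier (integer_mod_group (p ^ m))" using x by (rule funcset_mem)
  moreover have "p \<noteq> 0" using p_gt1 by simp
  ultimately have "\<rho> i x \<in> {0..<int (p ^ m)}" by (simp add: carrier_integer_mod_group)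
  then show ?thesis by simp
qed

lemma rv_digits: "g \<in> PG n \<Longrightarrow> rv n g \<in> digits p m n"
  unfolding rv_def digits_def PG_def using rho_range by (auto simp: PiE_iff)

lemma nu_R: "g \<in> PG n \<Longrightarrow> \<nu> {1..n} g \<in> RR"
  using nu unfolding hor_elem_def PG_def by auto

lemma nu_compat:
  assumes "n \<le> n'"
  shows "(\<Sum>g\<in>PG n. H g * \<nu> {1..n} g) = (\<Sum>y\<in>PG n'. H (restrict y {1..n}) * \<nu> {1..n'} y)"
proof -
  have sub: "{1..n} \<subseteq> {1..n'}" using assms by auto
  have eq: "\<nu> {1..n} g = (\<Sum>y\<in>{y\<in>PG n'. restrict y {1..n} = g}. \<nu> {1..n'} y)" if "g \<in> PG n" for g
    using nu sub that unfolding hor_elem_def PG_def by auto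
  have img: "(\<lambda>y. restrict y {1..n}) ` PG n' \<subseteq> PG n"
    using sub unfolding PG_def by (auto simp: PiE_iff)
  have "H g * \<nu> {1..n} g = (\<Sum>y\<in>{y\<in>PG n'. restrict y {1..n} = g}. H (restrict y {1..n}) * \<nu> {1..n'} y)"
    if "g \<in> PG n" for g
  proof -
    have "H g * \<nu> {1..n} g = (\<Sum>y\<in>{y\<in>PG n'. restrict y {1..n} = g}. H g * \<nu> {1..n'} y)"
      using eq[OF that] by (simp add: sum_distrib_left)
    also have "\<dots> = (\<Sum>y\<in>{y\<in>PG n'. restrict y {1..n} = g}. H (restrict y {1..n}) * \<nu> {1..n'} y)"
      by (rule sum.cong) auto
    finally show ?thesis .
  qed
  then have "(\<Sum>g\<in>PG n. H g * \<nu> {1..n} g) = (\<Sum>g\<in>PG n. (\<Sum>y\<in>{y\<in>PG n'. restrict y {1..n} = g}. H (restrict y {1..n}) * \<nu> {1..n'} y))"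
    by (rule sum.cong[OF refl])
  also have "\<dots> = (\<Sum>y\<in>PG n'. H (restrict y {1..n}) * \<nu> {1..n'} y)"
    by (rule sum.group[OF PG_finite PG_finite img])
  finally show ?thesis .
qed

lemma push_sum:
  "(\<Sum>a\<in>digits p m n. F a * rn n a) = (\<Sum>g\<in>PG n. F (rv n g) * \<nu> {1..n} g)"
proof -
  have fd: "finite (digits p m n)" unfolding digits_def by (intro finite_PiE) auto
  have set_eq: "{g \<in> PiE {1..n} (\<lambda>i. carrier (G i)). \<forall>i\<in>{1..n}. \<rho> i (g i) = a i} = {g\<in>PG n. rv n g = a}"
    if "a \<in> digits p m n" for a
  proof -
    have "(\<forall>i\<in>{1..n}. \<rho> i (g i) = a i) \<longleftrightarrow> rv n g = a" for g
      using that unfolding rv_def digits_def by (auto simp: fun_eq_iff PiE_iff restrict_def extensional_def)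
    then show ?thesis unfolding PG_def by auto
  qed
  have "F a * rn n a = (\<Sum>g\<in>{g\<in>PG n. rv n g = a}. F (rv n g) * \<nu> {1..n} g)" if "a \<in> digits p m n" for a
  proof -
    have "F a * rn n a = (\<Sum>g\<in>{g\<in>PG n. rv n g = a}. F a * \<nu> {1..n} g)"
      unfolding rn_def push_dig_def set_eq[OF that] by (simp add: sum_distrib_left)
    also have "\<dots> = (\<Sum>g\<in>{g\<in>PG n. rv n g = a}. F (rv n g) * \<nu> {1..n} g)"
      by (rule sum.cong) auto
    finally show ?thesis .
  qed
  then have "(\<Sum>a\<in>digits p m n. F a * rn n a) = (\<Sum>a\<in>digits p m n. (\<Sum>g\<in>{g\<in>PG n. rv n g = a}. F (rv n g) * \<nu> {1..n} g))"
    by (rule sum.cong[OF refl])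
  also have "\<dots> = (\<Sum>g\<in>PG n. F (rv n g) * \<nu> {1..n} g)"
    by (rule sum.group[OF PG_finite fd]) (auto simp: rv_digits)
  finally show ?thesis .
qed

lemma push_sum_lift:
  assumes "n \<le> n'"
  shows "(\<Sum>a\<in>digits p m n. F a * rn n a) = (\<Sum>y\<in>PG n'. F (rv n y) * \<nu> {1..n'} y)"
proof -
  have "(\<Sum>a\<in>digits p m n. F a * rn n a) = (\<Sum>g\<in>PG n. F (rv n g) * \<nu> {1..n} g)" by (rule push_sum)
  also have "\<dots> = (\<Sum>y\<in>PG n'. F (rv n (restrict y {1..n})) * \<nu> {1..n'} y)" by (rule nu_compat[OF assms])
  also have "\<dots> = (\<Sum>y\<in>PG n'. F (rv n y) * \<nu> {1..n'} y)"
  proof (intro sum.cong refl)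
    fix y
    have "rv n (restrict y {1..n}) = rv n y" unfolding rv_def by (rule restrict_ext) simp
    then show "F (rv n (restrict y {1..n})) * \<nu> {1..n'} y = F (rv n y) * \<nu> {1..n'} y" by simp
  qed
  finally show ?thesis .
qed

definition D :: "nat \<Rightarrow> (nat \<Rightarrow> 'g) \<Rightarrow> nat" where "D n g = digit_val p m n (\<lambda>i. \<rho> i (g i))"

lemma D_rv: "digit_val p m n (rv n g) = D n g"
  unfolding D_def rv_def by (rule digit_val_cong) simp

lemma D_bound: "g \<in> PG n' \<Longrightarrow> n \<le> n' \<Longrightarrow> D n g < p ^ (m * n)"
  unfolding D_def PG_def by (intro digit_val_bound rho_range) (auto simp: PiE_iff)

lemma D_mod: "n \<le> n' \<Longrightarrow> M \<le> m * n \<Longrightarrow> D n' g mod p ^ M = D n g mod p ^ M"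
  unfolding D_def by (rule digit_val_mod)

end

context vf begin

lemma prod_diff_ge:
  fixes k :: nat
  shows "(\<And>i. i < k \<Longrightarrow> 0 \<le> v (a i) \<and> 0 \<le> v (b i) \<and> c \<le> v (a i - b i))
   \<Longrightarrow> c \<le> v ((\<Prod>i<k. a i) - (\<Prod>i<k. b i))"
proof (induction k)
  case 0 then show ?case by simp
next
  case (Suc k)
  have IH: "c \<le> v ((\<Prod>i<k. a i) - (\<Prod>i<k. b i))" using Suc by auto
  have ak: "0 \<le> v (a k)" "0 \<le> v (b k)" "c \<le> v (a k - b k)" using Suc.prems[of k] by auto
  have pb: "0 \<le> v (\<Prod>i<k. b i)" using Suc.prems by (induction k) (auto simp: v_mult)
  have eq: "(\<Prod>i<Suc k. a i) - (\<Prod>i<Suc k. b i)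
      = ((\<Prod>i<k. a i) - (\<Prod>i<k. b i)) * a k + (\<Prod>i<k. b i) * (a k - b k)"
    by (simp add: algebra_simps)
  have 1: "c \<le> v (((\<Prod>i<k. a i) - (\<Prod>i<k. b i)) * a k)"
  proof -
    have "c + 0 \<le> v ((\<Prod>i<k. a i) - (\<Prod>i<k. b i)) + v (a k)" using IH ak by (intro add_mono)
    then show ?thesis by (simp add: v_mult)
  qed
  have 2: "c \<le> v ((\<Prod>i<k. b i) * (a k - b k))"
  proof -
    have "0 + c \<le> v (\<Prod>i<k. b i) + v (a k - b k)" using pb ak by (intro add_mono)
    then show ?thesis by (simp add: v_mult)
  qed
  show ?case unfolding eq using 1 2 by (rule v_add_ge)
qed

lemma v_of_int_dvd: "int p ^ M dvd z \<Longrightarrow> ereal (real M) \<le> v (of_int z)"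
proof -
  assume "int p ^ M dvd z"
  then obtain t where t: "z = int p ^ M * t" by blast
  have "v (of_int z) = v ((of_nat p :: 'a) ^ M) + v (of_int t)" by (simp add: t v_mult)
  also have "v ((of_nat p :: 'a) ^ M) = ereal (real M)" using v_power[of "of_nat p" 1 M] vp by (simp add: one_ereal_def)
  finally have "v (of_int z) = ereal (real M) + v (of_int t)" .
  moreover have "ereal (real M) + 0 \<le> ereal (real M) + v (of_int t :: 'a)"
    using v_of_int_ge[of t] by (intro add_mono) auto
  ultimately show ?thesis by simp
qed

lemma v_pow_ge: "ereal s \<le> v z \<Longrightarrow> ereal (real k * s) \<le> v (z ^ k)"
proof (induction k)
  case 0 then show ?case by simp
next
  case (Suc k)
  have "ereal (s + real k * s) \<le> v z + v (z ^ k)" using Suc by (intro ereal_add_le) auto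
  then show ?case by (simp add: v_mult algebra_simps)
qed

lemma binom_cong: "\<exists>C. \<forall>M x y. x mod p ^ M = y mod p ^ M \<longrightarrow>
    ereal (real M - C) \<le> v (of_nat (x choose k) - of_nat (y choose k) :: 'a)"
proof -
  have fz: "(fact k :: 'a) \<noteq> 0" by simp
  obtain C where C: "v (fact k :: 'a) = ereal C" using v_fin[OF fz] by blast
  have "ereal (real M - C) \<le> v (of_nat (x choose k) - of_nat (y choose k) :: 'a)"
    if xy: "x mod p ^ M = y mod p ^ M" for M x y
  proof -
    have fx: "fact k * (of_nat (x choose k) :: 'a) = (\<Prod>i<k. of_nat x - of_nat i)"
      by (simp add: binomial_gbinomial gbinomial_mult_fact atLeast0LessThan)
    have fy: "fact k * (of_nat (y choose k) :: 'a) = (\<Prod>i<k. of_nat y - of_nat i)"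
      by (simp add: binomial_gbinomial gbinomial_mult_fact atLeast0LessThan)
    have dvd: "int p ^ M dvd (int x - int y)"
    proof -
      have "int x mod int (p ^ M) = int y mod int (p ^ M)" using xy by (metis of_nat_mod)
      then show ?thesis by (simp add: mod_eq_dvd_iff of_nat_power)
    qed
    have "ereal (real M) \<le> v ((\<Prod>i<k. (of_nat x - of_nat i :: 'a)) - (\<Prod>i<k. of_nat y - of_nat i))"
    proof (rule prod_diff_ge)
      fix i
      have "(of_nat x - of_nat i :: 'a) = of_int (int x - int i)" by simp
      moreover have "(of_nat y - of_nat i :: 'a) = of_int (int y - int i)" by simp
      moreover have "(of_nat x - of_nat i) - (of_nat y - of_nat i) = (of_int (int x - int y) :: 'a)" by simp
      moreover note v_of_int_ge[of "int x - int i"] v_of_int_ge[of "int y - int i"] v_of_int_dvd[OF dvd]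
      ultimately show "0 \<le> v (of_nat x - of_nat i :: 'a) \<and> 0 \<le> v (of_nat y - of_nat i :: 'a) \<and>
          ereal (real M) \<le> v ((of_nat x - of_nat i) - (of_nat y - of_nat i) :: 'a)"
        by (simp only:)
    qed
    then have "ereal (real M) \<le> v (fact k * (of_nat (x choose k) - of_nat (y choose k) :: 'a))"
      using fx fy by (simp add: right_diff_distrib)
    then have "ereal (real M) \<le> ereal C + v (of_nat (x choose k) - of_nat (y choose k) :: 'a)"
      using C by (simp add: v_mult)
    then show ?thesis by (cases "v (of_nat (x choose k) - of_nat (y choose k) :: 'a)") auto
  qed
  then show ?thesis by blast
qed

end

context setting begin

definition RS :: "nat \<Rightarrow> nat \<Rightarrow> 'a" where
  "RS k M = (\<Sum>x<p ^ M. of_nat (x choose k) * push_Zp p m rn M x)"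

lemma nM_le: "M \<le> m * n' \<Longrightarrow> (M + m - 1) div m \<le> n'"
proof -
  assume a: "M \<le> m * n'"
  have "M + m - 1 < m * (n' + 1)" using a m1 by (simp add: algebra_simps)
  then have "(M + m - 1) div m < n' + 1" using m1 by (simp add: div_less_iff_less_mult mult.commute)
  then show ?thesis by simp
qed

lemma nM_ge: "M \<le> m * ((M + m - 1) div m)"
proof -
  have "m * ((M + m - 1) div m) + (M + m - 1) mod m = M + m - 1" by (rule mult_div_mod_eq)
  moreover have "(M + m - 1) mod m < m" using m1 by simp
  ultimately show ?thesis using m1 by linarith
qed

lemma RS_lift:
  assumes "M \<le> m * n'"
  shows "RS k M = (\<Sum>y\<in>PG n'. of_nat ((D n' y mod p ^ M) choose k) * \<nu> {1..n'} y)"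
proof -
  define n where "n = (M + m - 1) div m"
  have nn': "n \<le> n'" unfolding n_def using nM_le[OF assms] .
  have Mn: "M \<le> m * n" unfolding n_def by (rule nM_ge)
  have fd: "finite (digits p m n)" unfolding digits_def by (intro finite_PiE) auto
  have pM: "p ^ M > 0" using p_gt1 by simp
  have "RS k M = (\<Sum>x<p ^ M. (\<Sum>a\<in>{a\<in>digits p m n. digit_val p m n a mod p ^ M = x}.
            of_nat ((digit_val p m n a mod p ^ M) choose k) * rn n a))"
    unfolding RS_def push_Zp_def Let_def n_def[symmetric]
    by (intro sum.cong refl) (auto simp: sum_distrib_left)
  also have "\<dots> = (\<Sum>a\<in>digits p m n. of_nat ((digit_val p m n a mod p ^ M) choose k) * rn n a)"
    by (rule sum.group[OF fd]) (use pM in auto)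
  also have "\<dots> = (\<Sum>y\<in>PG n'. of_nat ((digit_val p m n (rv n y) mod p ^ M) choose k) * \<nu> {1..n'} y)"
    by (rule push_sum_lift[OF nn'])
  also have "\<dots> = (\<Sum>y\<in>PG n'. of_nat ((D n' y mod p ^ M) choose k) * \<nu> {1..n'} y)"
    by (intro sum.cong refl) (simp add: D_rv D_mod[OF nn' Mn])
  finally show ?thesis .
qed

lemma RS_R: "RS k M \<in> RR"
  unfolding RS_lift[of M M k, OF order_trans[OF _ mult_le_mono1[OF m1]], simplified]
  using nu_R by (auto intro!: RR_sum RR_mult RR_of_nat)

lemma RS_conv: "\<exists>c. vconv v (RS k) c"
proof -
  obtain C where C: "\<And>M x y. x mod p ^ M = y mod p ^ M \<Longrightarrow>
      ereal (real M - C) \<le> v (of_nat (x choose k) - of_nat (y choose k) :: 'a)"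
    using binom_cong[of k] by blast
  have "ereal (real M - C) \<le> v (RS k (Suc M) - RS k M)" for M
  proof -
    have "1 * Suc M \<le> m * Suc M" using m1 by (rule mult_le_mono1)
    then have le: "Suc M \<le> m * Suc M" by simp
    have le2: "M \<le> m * Suc M" using le by simp
    have "RS k (Suc M) - RS k M = (\<Sum>y\<in>PG (Suc M). (of_nat ((D (Suc M) y mod p ^ Suc M) choose k)
        - of_nat ((D (Suc M) y mod p ^ M) choose k)) * \<nu> {1..Suc M} y)"
      unfolding RS_lift[OF le] RS_lift[OF le2] by (simp add: sum_subtractf left_diff_distrib)
    also have "ereal (real M - C) \<le> v \<dots>"
    proof (rule v_sum_ge)
      fix y assume y: "y \<in> PG (Suc M)"
      have "(D (Suc M) y mod p ^ Suc M) mod p ^ M = (D (Suc M) y mod p ^ M) mod p ^ M"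
        by (simp add: mod_mod_cancel le_imp_power_dvd)
      then have "ereal (real M - C) \<le> v (of_nat ((D (Suc M) y mod p ^ Suc M) choose k)
          - of_nat ((D (Suc M) y mod p ^ M) choose k) :: 'a)" by (rule C)
      moreover have "0 \<le> v (\<nu> {1..Suc M} y)" using nu_R[OF y] by (simp add: RR_iff)
      ultimately have "ereal (real M - C) + 0 \<le> v (of_nat ((D (Suc M) y mod p ^ Suc M) choose k)
          - of_nat ((D (Suc M) y mod p ^ M) choose k) :: 'a) + v (\<nu> {1..Suc M} y)" by (rule add_mono)
      then show "ereal (real M - C) \<le> v ((of_nat ((D (Suc M) y mod p ^ Suc M) choose k)
          - of_nat ((D (Suc M) y mod p ^ M) choose k)) * \<nu> {1..Suc M} y)" by (simp add: v_mult)
    qed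
    finally show ?thesis .
  qed
  moreover have "\<exists>N. B \<le> real N - C" for B by (rule exI[of _ "nat \<lceil>B + C\<rceil>"]) linarith
  moreover have "mono (\<lambda>M::nat. real M - C)" by (intro monoI) simp
  ultimately show ?thesis by (rule vconv_consec)
qed

definition ff :: "'a fps" where "ff = amice p v (push_Zp p m rn)"

lemma ff_conv: "vconv v (RS k) (fps_nth ff k)"
proof -
  obtain c where c: "vconv v (RS k) c" using RS_conv by blast
  have "fps_nth ff k = (THE c. vconv v (RS k) c)"
    unfolding ff_def amice_def Zp_integral_def RS_def by simp
  also have "\<dots> = c" using c vconv_unique by blast
  finally show ?thesis using c by simp
qed

lemma ff_R: "fpsR ff"
  unfolding fpsR_def using RR_closed ff_conv RS_R unfolding vclosed_def by blast

end

lemma pow_mod_one: "(w::'a::comm_monoid_mult) ^ Q = 1 \<Longrightarrow> w ^ x = w ^ (x mod Q)"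
proof -
  assume w: "w ^ Q = 1"
  have "w ^ x = w ^ (Q * (x div Q) + x mod Q)" by (simp only: mult_div_mod_eq)
  also have "\<dots> = (w ^ Q) ^ (x div Q) * w ^ (x mod Q)" by (simp only: power_add power_mult)
  finally show ?thesis using w by simp
qed

lemma n_lt_ppow: "1 < (p::nat) \<Longrightarrow> n < p ^ n"
proof -
  assume "1 < p"
  then have "2 ^ n \<le> p ^ n" by (intro power_mono) auto
  moreover have "n < 2 ^ n" by (rule less_exp)
  ultimately show ?thesis by linarith
qed

context setting begin

definition Eval :: "nat \<Rightarrow> 'a \<Rightarrow> 'a" where
  "Eval n0 z = (\<Sum>a\<in>digits p m n0. (1 + z) ^ (digit_val p m n0 a) * rn n0 a)"

lemma unif_N: "\<exists>N. \<forall>k<L. \<forall>M\<ge>N. ereal B \<le> v (RS k M - fps_nth ff k)"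
proof (induction L)
  case 0 then show ?case by simp
next
  case (Suc L)
  then obtain N1 where N1: "\<forall>k<L. \<forall>M\<ge>N1. ereal B \<le> v (RS k M - fps_nth ff k)" by blast
  obtain N2 where N2: "\<forall>M\<ge>N2. ereal B \<le> v (RS L M - fps_nth ff L)"
    using ff_conv[of L] unfolding vconv_def by blast
  have "\<forall>k<Suc L. \<forall>M\<ge>max N1 N2. ereal B \<le> v (RS k M - fps_nth ff k)"
    using N1 N2 by (auto simp: less_Suc_eq)
  then show ?case by blast
qed

lemma AM:
  assumes z1: "(1 + z) ^ (p ^ (m * n0)) = 1" and s: "0 < s" "ereal s \<le> v z"
  shows "ereal (real L * s) \<le> v (Eval n0 z - (\<Sum>k<L. fps_nth ff k * z ^ k))"
proof -
  obtain N where N: "\<forall>k<L. \<forall>M\<ge>N. ereal (real L * s) \<le> v (RS k M - fps_nth ff k)"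
    using unif_N by blast
  define n' where "n' = max n0 (max N L)"
  define M where "M = m * n'"
  define T where "T = p ^ M"
  have n'M: "n' \<le> M" unfolding M_def using m1 by simp
  have NM: "N \<le> M" using n'M unfolding n'_def by simp
  have KT: "L \<le> T"
  proof -
    have "L \<le> M" using n'M unfolding n'_def by simp
    also have "M < T" unfolding T_def using n_lt_ppow p_gt1 by blast
    finally show ?thesis by simp
  qed
  have n0n': "n0 \<le> n'" unfolding n'_def by simp
  have DT: "D n' y < T" if "y \<in> PG n'" for y unfolding T_def M_def using D_bound[OF that] by simp
  have RSk: "RS k M = (\<Sum>y\<in>PG n'. of_nat (D n' y choose k) * \<nu> {1..n'} y)" for k
  proof -
    have "RS k M = (\<Sum>y\<in>PG n'. of_nat ((D n' y mod p ^ M) choose k) * \<nu> {1..n'} y)"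
      by (rule RS_lift) (simp add: M_def)
    also have "\<dots> = (\<Sum>y\<in>PG n'. of_nat (D n' y choose k) * \<nu> {1..n'} y)"
      by (intro sum.cong refl) (use DT in \<open>simp add: T_def\<close>)
    finally show ?thesis .
  qed
  have binom: "(1 + z) ^ d = (\<Sum>k<T. of_nat (d choose k) * z ^ k)" if "d < T" for d
  proof -
    have "(1 + z) ^ d = (z + 1) ^ d" by (simp add: add.commute)
    also have "\<dots> = (\<Sum>k\<le>d. of_nat (d choose k) * z ^ k)" by (simp add: binomial_ring)
    also have "\<dots> = (\<Sum>k<T. of_nat (d choose k) * z ^ k)"
      using that by (intro sum.mono_neutral_left) auto
    finally show ?thesis .
  qed
  have "Eval n0 z = (\<Sum>y\<in>PG n'. (1 + z) ^ digit_val p m n0 (rv n0 y) * \<nu> {1..n'} y)"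
    unfolding Eval_def by (rule push_sum_lift[OF n0n'])
  also have "\<dots> = (\<Sum>y\<in>PG n'. (1 + z) ^ D n' y * \<nu> {1..n'} y)"
  proof (intro sum.cong refl)
    fix y
    have "(1 + z) ^ D n0 y = (1 + z) ^ (D n0 y mod p ^ (m * n0))" by (rule pow_mod_one[OF z1])
    also have "D n0 y mod p ^ (m * n0) = D n' y mod p ^ (m * n0)" using D_mod[OF n0n', of "m * n0" y] by simp
    also have "(1 + z) ^ (D n' y mod p ^ (m * n0)) = (1 + z) ^ D n' y" by (rule pow_mod_one[OF z1, symmetric])
    finally show "(1 + z) ^ digit_val p m n0 (rv n0 y) * \<nu> {1..n'} y = (1 + z) ^ D n' y * \<nu> {1..n'} y"
      by (simp add: D_rv)
  qed
  also have "\<dots> = (\<Sum>y\<in>PG n'. (\<Sum>k<T. of_nat (D n' y choose k) * z ^ k) * \<nu> {1..n'} y)"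
    by (intro sum.cong refl) (simp add: binom DT)
  also have "\<dots> = (\<Sum>y\<in>PG n'. \<Sum>k<T. of_nat (D n' y choose k) * z ^ k * \<nu> {1..n'} y)"
    by (simp add: sum_distrib_right)
  also have "\<dots> = (\<Sum>k<T. \<Sum>y\<in>PG n'. of_nat (D n' y choose k) * z ^ k * \<nu> {1..n'} y)"
    by (rule sum.swap)
  also have "\<dots> = (\<Sum>k<T. RS k M * z ^ k)"
    unfolding RSk by (simp add: sum_distrib_right sum_distrib_left algebra_simps)
  finally have E: "Eval n0 z = (\<Sum>k<T. RS k M * z ^ k)" .
  have split: "(\<Sum>k<T. RS k M * z ^ k) = (\<Sum>k<L. RS k M * z ^ k) + (\<Sum>k\<in>{L..<T}. RS k M * z ^ k)"
    using KT by (simp add: lessThan_atLeast0 sum.atLeastLessThan_concat)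
  have "Eval n0 z - (\<Sum>k<L. fps_nth ff k * z ^ k)
      = (\<Sum>k<L. (RS k M - fps_nth ff k) * z ^ k) + (\<Sum>k\<in>{L..<T}. RS k M * z ^ k)"
    unfolding E split by (simp add: sum_subtractf left_diff_distrib)
  moreover have "ereal (real L * s) \<le> v (\<Sum>k<L. (RS k M - fps_nth ff k) * z ^ k)"
  proof (rule v_sum_ge)
    fix k assume "k \<in> {..<L}"
    then have "ereal (real L * s) \<le> v (RS k M - fps_nth ff k)" using N NM by auto
    moreover have "0 \<le> v (z ^ k)" using s by (intro v_power_ge) (auto simp: zero_ereal_def intro: order_trans[of _ "ereal s"])
    ultimately have "ereal (real L * s) + 0 \<le> v (RS k M - fps_nth ff k) + v (z ^ k)" by (rule add_mono)
    then show "ereal (real L * s) \<le> v ((RS k M - fps_nth ff k) * z ^ k)" by (simp add: v_mult)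
  qed
  moreover have "ereal (real L * s) \<le> v (\<Sum>k\<in>{L..<T}. RS k M * z ^ k)"
  proof (rule v_sum_ge)
    fix k assume k: "k \<in> {L..<T}"
    have "ereal (real L * s) \<le> ereal (real k * s)" using k s by (simp add: mult_right_mono)
    also have "\<dots> \<le> v (z ^ k)" using v_pow_ge[OF s(2)] .
    finally have 1: "ereal (real L * s) \<le> v (z ^ k)" .
    have "0 + ereal (real L * s) \<le> v (RS k M) + v (z ^ k)" using RS_R 1 by (intro add_mono) (auto simp: RR_iff)
    then show "ereal (real L * s) \<le> v (RS k M * z ^ k)" by (simp add: v_mult)
  qed
  ultimately show ?thesis by (simp add: v_add_ge)
qed

end

context setting begin

lemma E_val:
  assumes wf: "weierstrass_fact RR \<pi> ff mu lam"
    and z1: "(1 + z) ^ (p ^ (m * n0)) = 1" and vz: "v z = ereal s" and s: "0 < s"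
    and small: "real lam * s < 1 / real e"
  shows "v (Eval n0 z) = ereal (real mu / real e + real lam * s)"
proof -
  define t where "t = real mu / real e + real lam * s"
  define L where "L = nat \<lceil>t / s\<rceil> + lam + 1"
  have Ls: "t < real L * s"
  proof -
    have "t / s < real L" unfolding L_def by linarith
    then show ?thesis using s by (simp add: field_simps)
  qed
  have lamL: "lam < L" unfolding L_def by simp
  define c where "c k = fps_nth ff k" for k
  have c_ge: "ereal (real mu / real e) \<le> v (c k)" for k using wf_props(1)[OF wf] unfolding c_def by blast
  have c_lam: "v (c lam) = ereal (real mu / real e)" using wf_props(2)[OF wf] unfolding c_def .
  have c_low: "ereal ((real mu + 1) / real e) \<le> v (c k)" if "k < lam" for k
    using wf_props(3)[OF wf] that unfolding c_def by blast
  have vzk: "v (z ^ k) = ereal (real k * s)" for k using v_power[OF vz] .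
  define d where "d = min (1 / real e - real lam * s) s"
  have d: "0 < d" unfolding d_def using small s by simp
  have P_split: "(\<Sum>k<L. c k * z ^ k) = c lam * z ^ lam + (\<Sum>k\<in>{..<L} - {lam}. c k * z ^ k)"
    using lamL by (simp add: sum.remove)
  have main: "v (c lam * z ^ lam) = ereal t" unfolding t_def using c_lam vzk by (simp add: v_mult)
  have others: "ereal (t + d) \<le> v (\<Sum>k\<in>{..<L} - {lam}. c k * z ^ k)"
  proof (rule v_sum_ge)
    fix k assume k: "k \<in> {..<L} - {lam}"
    show "ereal (t + d) \<le> v (c k * z ^ k)"
    proof (cases "k < lam")
      case True
      have "ereal ((real mu + 1) / real e + real k * s) \<le> v (c k) + v (z ^ k)"
        using c_low[OF True] vzk by (intro ereal_add_le) auto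
      moreover have "t + d \<le> (real mu + 1) / real e + real k * s"
      proof -
        have "d \<le> 1 / real e - real lam * s" unfolding d_def by simp
        moreover have "0 \<le> real k * s" using s by simp
        ultimately show ?thesis unfolding t_def by (simp add: add_divide_distrib)
      qed
      ultimately have "ereal (t + d) \<le> v (c k) + v (z ^ k)" by (meson ereal_less_eq(3) order_trans)
      then show ?thesis by (simp add: v_mult)
    next
      case False
      then have "lam + 1 \<le> k" using k by auto
      then have "real (lam + 1) \<le> real k" by linarith
      then have "real (lam + 1) * s \<le> real k * s" using s by (intro mult_right_mono) auto
      then have "real lam * s + s \<le> real k * s" by (simp add: algebra_simps)
      moreover have "d \<le> s" unfolding d_def by simp
      ultimately have "t + d \<le> real mu / real e + real k * s" unfolding t_def by simp
      moreover have "ereal (real mu / real e + real k * s) \<le> v (c k) + v (z ^ k)"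
        using c_ge vzk by (intro ereal_add_le) auto
      ultimately have "ereal (t + d) \<le> v (c k) + v (z ^ k)" by (meson ereal_less_eq(3) order_trans)
      then show ?thesis by (simp add: v_mult)
    qed
  qed
  have vP: "v (\<Sum>k<L. c k * z ^ k) = ereal t"
  proof -
    have lt: "ereal t < ereal (t + d)" using d by simp
    have "v (c lam * z ^ lam) < v (\<Sum>k\<in>{..<L} - {lam}. c k * z ^ k)"
      unfolding main by (rule order_less_le_trans[OF lt others])
    then show ?thesis unfolding P_split using main by (simp add: v_add_strict)
  qed
  have s_le: "ereal s \<le> v z" using vz by simp
  have rest: "ereal (real L * s) \<le> v (Eval n0 z - (\<Sum>k<L. c k * z ^ k))"
    using AM[OF z1 s s_le, of L] unfolding c_def .
  have "v (\<Sum>k<L. c k * z ^ k) < v (Eval n0 z - (\<Sum>k<L. c k * z ^ k))"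
  proof -
    have lt: "ereal t < ereal (real L * s)" using Ls by simp
    show ?thesis unfolding vP by (rule order_less_le_trans[OF lt rest])
  qed
  then have "v ((\<Sum>k<L. c k * z ^ k) + (Eval n0 z - (\<Sum>k<L. c k * z ^ k))) = v (\<Sum>k<L. c k * z ^ k)"
    by (rule v_add_strict)
  then have "v ((\<Sum>k<L. c k * z ^ k) + (Eval n0 z - (\<Sum>k<L. c k * z ^ k))) = ereal t"
    using vP by simp
  then show ?thesis unfolding t_def by simp
qed

lemma ff_zero_rn:
  assumes ff0: "ff = 0" and a0: "a0 \<in> digits p m n0"
  shows "rn n0 a0 = 0"
proof -
  define N where "N = m * n0"
  define Q where "Q = p ^ N"
  have Q0: "Q > 0" unfolding Q_def using p_gt1 by simp
  have Ezero: "Eval n0 (\<zeta> N ^ j - 1) = 0" for j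
  proof -
    define z where "z = \<zeta> N ^ j - 1"
    have z1: "(1 + z) ^ (p ^ (m * n0)) = 1" unfolding z_def N_def[symmetric] using z_pow_pow by simp
    obtain s where s: "0 < s" "ereal s \<le> v z"
    proof (cases "N = 0")
      case True
      then have "\<zeta> N = 1" using z_pow[of N] by simp
      then have "z = 0" unfolding z_def by simp
      then show ?thesis using that[of 1] by simp
    next
      case False
      have "v (\<zeta> N - 1) \<le> v z" unfolding z_def using v_geo[of "\<zeta> N" j] z_v0 by simp
      moreover have "v (\<zeta> N - 1) = ereal (xk N)" using v_z1 False by simp
      ultimately show ?thesis using that[of "xk N"] xk_pos by simp
    qed
    have "ereal (real L * s) \<le> v (Eval n0 z)" for L
      using AM[OF z1 s, of L] ff0 by simp
    then have "Eval n0 z = 0"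
    proof (intro v_all_ge)
      fix M :: real
      assume h: "\<And>L. ereal (real L * s) \<le> v (Eval n0 z)"
      have "M \<le> real (nat \<lceil>M / s\<rceil>) * s"
      proof -
        have "M / s \<le> real (nat \<lceil>M / s\<rceil>)" by linarith
        then show ?thesis using s by (simp add: field_simps)
      qed
      then show "ereal M \<le> v (Eval n0 z)" using h[of "nat \<lceil>M / s\<rceil>"] by (meson ereal_less_eq(3) order_trans)
    qed
    then show ?thesis unfolding z_def .
  qed
  define y where "y = digit_val p m n0 a0"
  have fd: "finite (digits p m n0)" unfolding digits_def by (intro finite_PiE) auto
  have dvb: "digit_val p m n0 a < Q" if "a \<in> digits p m n0" for a
    unfolding Q_def N_def using that unfolding digits_def by (intro digit_val_bound) auto
  have yQ: "y < Q" unfolding y_def using dvb[OF a0] .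
  have "0 = (\<Sum>j<Q. (\<zeta> N ^ j) ^ (Q - y) * Eval n0 (\<zeta> N ^ j - 1))" using Ezero by simp
  also have "\<dots> = (\<Sum>j<Q. \<Sum>a\<in>digits p m n0. (\<zeta> N ^ j) ^ (digit_val p m n0 a + (Q - y)) * rn n0 a)"
    unfolding Eval_def by (simp add: sum_distrib_left power_add algebra_simps)
  also have "\<dots> = (\<Sum>a\<in>digits p m n0. (\<Sum>j<Q. (\<zeta> N ^ j) ^ (digit_val p m n0 a + (Q - y))) * rn n0 a)"
    by (subst sum.swap) (simp add: sum_distrib_right)
  also have "\<dots> = (\<Sum>a\<in>digits p m n0. (if a = a0 then of_nat Q * rn n0 a else 0))"
  proof (intro sum.cong refl)
    fix a assume a: "a \<in> digits p m n0"
    have "Q dvd (digit_val p m n0 a + (Q - y)) \<longleftrightarrow> a = a0"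
    proof
      assume dv: "Q dvd (digit_val p m n0 a + (Q - y))"
      have "0 < digit_val p m n0 a + (Q - y)" "digit_val p m n0 a + (Q - y) < 2 * Q" using yQ dvb[OF a] by auto
      moreover obtain c where c: "digit_val p m n0 a + (Q - y) = Q * c" using dv by blast
      ultimately have "0 < c" "c < 2" by (auto simp: mult.commute)
      then have "c = 1" by simp
      then have "digit_val p m n0 a = digit_val p m n0 a0" using c yQ unfolding y_def by simp
      then show "a = a0" using digit_val_inj[OF a a0] by simp
    qed (use yQ in \<open>simp add: y_def\<close>)
    then show "(\<Sum>j<Q. (\<zeta> N ^ j) ^ (digit_val p m n0 a + (Q - y))) * rn n0 a
        = (if a = a0 then of_nat Q * rn n0 a else 0)"
      using orth[of N "digit_val p m n0 a + (Q - y)"] unfolding Q_def by auto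
  qed
  also have "\<dots> = of_nat Q * rn n0 a0" using a0 fd by (simp add: sum.delta')
  finally show ?thesis using Q0 by simp
qed

end

context vz begin

lemma z_step: "\<zeta> (k + m) ^ (p ^ m) = \<zeta> k" by (rule z_desc)

lemma W_eq:
  assumes m: "1 \<le> m" and a: "0 \<le> a" "a < int (p ^ m)"
  shows "(\<Sum>\<chi>\<in>(chars (p ^ m) :: (int \<Rightarrow> 'a) set). u_fac m \<zeta> j \<chi> * \<chi> a)
     = of_nat (p ^ m) * ((\<zeta> (m * (j + 2)) - 1) * \<zeta> (m * (j + 2)) ^ nat a / (\<zeta> (m * (j + 2)) ^ (p ^ m) - 1))"
proof -
  define z where "z = \<zeta> (m * (j + 2))"
  define q where "q = p ^ m"
  have zq: "z ^ q = \<zeta> (m * (j + 1))"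
    unfolding z_def q_def using z_step[of "m * (j + 1)"] by (simp add: algebra_simps)
  have zq1: "z ^ q \<noteq> 1" unfolding zq using z_ne1 m by simp
  have anat: "nat a < q" using a unfolding q_def by (simp add: nat_less_iff)
  have trm: "u_fac m \<zeta> j (chi_of m i) * chi_of m i a = (z - 1) * ((\<zeta> m ^ i) ^ (nat a + 1) / (z - \<zeta> m ^ i))" for i
  proof -
    define w where "w = \<zeta> m ^ i"
    have w0: "w \<noteq> 0" unfolding w_def using z_nz by simp
    have wq: "w ^ q = 1" unfolding w_def q_def by (rule z_pow_pow)
    have zw: "z - w \<noteq> 0" using wq zq1 by auto
    have c1: "chi_of m i 1 = w" unfolding chi_of_def w_def by simp
    have ca: "chi_of m i a = w ^ nat a" unfolding chi_of_def w_def using a(1)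
      by (metis nonneg_eq_int power_int_of_nat nat_int)
    have d: "z * inverse w - 1 = (z - w) / w" using w0 by (simp add: field_simps)
    have "u_fac m \<zeta> j (chi_of m i) * chi_of m i a = (z - 1) / ((z - w) / w) * w ^ nat a"
      unfolding u_fac_def c1 ca z_def[symmetric] d by simp
    also have "\<dots> = (z - 1) * (w ^ (nat a + 1) / (z - w))" using w0 zw by (simp add: field_simps)
    finally show ?thesis unfolding w_def .
  qed
  have "(\<Sum>\<chi>\<in>(chars (p ^ m) :: (int \<Rightarrow> 'a) set). u_fac m \<zeta> j \<chi> * \<chi> a)
      = (\<Sum>i<p ^ m. u_fac m \<zeta> j (chi_of m i) * chi_of m i a)" by (rule sum_chars)
  also have "\<dots> = (z - 1) * (\<Sum>i<p ^ m. (\<zeta> m ^ i) ^ (nat a + 1) / (z - \<zeta> m ^ i))"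
    by (simp add: trm sum_distrib_left)
  also have "(\<Sum>i<p ^ m. (\<zeta> m ^ i) ^ (nat a + 1) / (z - \<zeta> m ^ i)) = of_nat (p ^ m) * z ^ nat a / (z ^ (p ^ m) - 1)"
    by (rule key_sum) (use zq1 anat in \<open>simp_all add: q_def\<close>)
  finally show ?thesis unfolding z_def by (simp add: algebra_simps)
qed

end

context setting begin

definition Cn :: "nat \<Rightarrow> 'a" where
  "Cn n = (\<Prod>i=1..n. (\<zeta> (m * (n - i + 2)) - 1) / (\<zeta> (m * (n - i + 2)) ^ (p ^ m) - 1))"

lemma zN: "i \<in> {1..n+1} \<Longrightarrow> \<zeta> (m * (n + 2 - i)) = \<zeta> (m * (n + 1)) ^ (p ^ (m * (i - 1)))"
proof -
  assume i: "i \<in> {1..n+1}"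
  have "(n + 2 - i) + (i - 1) = n + 1" using i by auto
  then have "m * (n + 2 - i) + m * (i - 1) = m * (n + 1)" by (metis add_mult_distrib2)
  then show ?thesis using z_desc[of "m * (n + 2 - i)" "m * (i - 1)"] by simp
qed

lemma zN_dv: "a \<in> digits p m (n + 1) \<Longrightarrow>
   \<zeta> (m * (n + 1)) ^ digit_val p m (n + 1) a
   = (\<Prod>i=1..n. \<zeta> (m * (n - i + 2)) ^ nat (a i)) * \<zeta> m powi a (n + 1)"
proof -
  assume a: "a \<in> digits p m (n + 1)"
  have "\<zeta> (m * (n + 1)) ^ digit_val p m (n + 1) a = (\<Prod>i=1..n+1. \<zeta> (m * (n + 1)) ^ (nat (a i) * p ^ (m * (i - 1))))"
    unfolding digit_val_def by (rule power_sum)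
  also have "\<dots> = (\<Prod>i=1..n+1. \<zeta> (m * (n + 2 - i)) ^ nat (a i))"
  proof (rule prod.cong[OF refl])
    fix i assume i: "i \<in> {1..n+1}"
    show "\<zeta> (m * (n + 1)) ^ (nat (a i) * p ^ (m * (i - 1))) = \<zeta> (m * (n + 2 - i)) ^ nat (a i)"
      unfolding zN[OF i] by (simp add: power_mult[symmetric] mult.commute)
  qed
  also have "\<dots> = (\<Prod>i=1..n. \<zeta> (m * (n + 2 - i)) ^ nat (a i)) * \<zeta> m ^ nat (a (n + 1))"
    by (simp add: prod.cl_ivl_Suc)
  also have "(\<Prod>i=1..n. \<zeta> (m * (n + 2 - i)) ^ nat (a i)) = (\<Prod>i=1..n. \<zeta> (m * (n - i + 2)) ^ nat (a i))"
    by (intro prod.cong refl) (simp add: Suc_diff_le)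
  also have "\<zeta> m ^ nat (a (n + 1)) = \<zeta> m powi a (n + 1)"
  proof -
    have "0 \<le> a (n + 1)" using a unfolding digits_def by (auto simp: PiE_iff)
    then show ?thesis by (metis nonneg_eq_int power_int_of_nat nat_int)
  qed
  finally show ?thesis .
qed

lemma S_eq: "S_sum p m \<zeta> rn n = Cn n * Eval (n + 1) (\<zeta> (m * (n + 1)) - 1)"
proof -
  define q where "q = p ^ m"
  define \<chi>0 where "\<chi>0 = (\<lambda>a::int. \<zeta> m powi a)"
  define U where "U i \<chi> = u_fac m \<zeta> (n - i) \<chi>" for i \<chi>
  define CH where "CH = PiE {1..n} (\<lambda>_. (chars q :: (int \<Rightarrow> 'a) set))"
  have fCH: "finite CH" unfolding CH_def q_def using finite_chars by (intro finite_PiE) auto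
  have fd: "finite (digits p m (n + 1))" unfolding digits_def by (intro finite_PiE) auto
  have q0: "(of_nat q :: 'a) \<noteq> 0" unfolding q_def using p_gt1 by simp
  have A: "(\<Prod>j=1..n+1. (\<chi>(n + 1 := \<chi>0)) j (a j)) = (\<Prod>j=1..n. \<chi> j (a j)) * \<chi>0 (a (n + 1))" for \<chi> a
  proof -
    have "(\<Prod>j=1..n+1. (\<chi>(n + 1 := \<chi>0)) j (a j)) = (\<Prod>j=1..n. (\<chi>(n + 1 := \<chi>0)) j (a j)) * \<chi>0 (a (n + 1))"
      by (simp add: prod.cl_ivl_Suc)
    moreover have "(\<Prod>j=1..n. (\<chi>(n + 1 := \<chi>0)) j (a j)) = (\<Prod>j=1..n. \<chi> j (a j))"
      by (intro prod.cong refl) auto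
    ultimately show ?thesis by simp
  qed
  have "S_sum p m \<zeta> rn n = 1 / of_nat (q ^ n) *
      (\<Sum>\<chi>\<in>CH. (\<Prod>i=1..n. U i (\<chi> i)) * (\<Sum>a\<in>digits p m (n + 1).
          ((\<Prod>j=1..n. \<chi> j (a j)) * \<chi>0 (a (n + 1))) * rn (n + 1) a))"
    unfolding S_sum_def Let_def dig_char_int_def \<chi>0_def[symmetric] U_def CH_def q_def A
    by (simp add: power_mult)
  also have "\<dots> = (\<Sum>a\<in>digits p m (n + 1). rn (n + 1) a * \<chi>0 (a (n + 1)) *
      (1 / of_nat (q ^ n) * (\<Sum>\<chi>\<in>CH. (\<Prod>i=1..n. U i (\<chi> i) * \<chi> i (a i)))))"
    by (simp add: sum_distrib_left sum_distrib_right prod.distrib sum.swap[of _ CH] algebra_simps)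
  also have "\<dots> = (\<Sum>a\<in>digits p m (n + 1). rn (n + 1) a * \<chi>0 (a (n + 1)) *
      (\<Prod>i=1..n. (\<zeta> (m * (n - i + 2)) - 1) * \<zeta> (m * (n - i + 2)) ^ nat (a i) / (\<zeta> (m * (n - i + 2)) ^ (p ^ m) - 1)))"
  proof (intro sum.cong refl)
    fix a assume a: "a \<in> digits p m (n + 1)"
    have "(\<Sum>\<chi>\<in>CH. (\<Prod>i=1..n. U i (\<chi> i) * \<chi> i (a i))) = (\<Prod>i=1..n. \<Sum>\<chi>\<in>(chars q :: (int \<Rightarrow> 'a) set). U i \<chi> * \<chi> (a i))"
      unfolding CH_def using finite_chars unfolding q_def by (intro prod_sum_PiE[symmetric]) auto
    also have "\<dots> = (\<Prod>i=1..n. of_nat q * ((\<zeta> (m * (n - i + 2)) - 1) * \<zeta> (m * (n - i + 2)) ^ nat (a i) / (\<zeta> (m * (n - i + 2)) ^ (p ^ m) - 1)))"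
    proof (intro prod.cong refl)
      fix i assume i: "i \<in> {1..n}"
      have ai: "0 \<le> a i" "a i < int (p ^ m)" using a i unfolding digits_def by (auto simp: PiE_iff)
      have "n - i + 2 = (n - i) + 2" by simp
      show "(\<Sum>\<chi>\<in>(chars q :: (int \<Rightarrow> 'a) set). U i \<chi> * \<chi> (a i)) = of_nat q * ((\<zeta> (m * (n - i + 2)) - 1) * \<zeta> (m * (n - i + 2)) ^ nat (a i) / (\<zeta> (m * (n - i + 2)) ^ (p ^ m) - 1))"
        unfolding U_def q_def using W_eq[OF m1 ai, of "n - i"] by simp
    qed
    also have "\<dots> = of_nat (q ^ n) * (\<Prod>i=1..n. (\<zeta> (m * (n - i + 2)) - 1) * \<zeta> (m * (n - i + 2)) ^ nat (a i) / (\<zeta> (m * (n - i + 2)) ^ (p ^ m) - 1))"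
    proof -
      have "(\<Prod>i=1..n. of_nat q * ((\<zeta> (m * (n - i + 2)) - 1) * \<zeta> (m * (n - i + 2)) ^ nat (a i) / (\<zeta> (m * (n - i + 2)) ^ (p ^ m) - 1)))
          = (\<Prod>i=1..n. (of_nat q :: 'a)) * (\<Prod>i=1..n. (\<zeta> (m * (n - i + 2)) - 1) * \<zeta> (m * (n - i + 2)) ^ nat (a i) / (\<zeta> (m * (n - i + 2)) ^ (p ^ m) - 1))"
        by (rule prod.distrib)
      moreover have "(\<Prod>i=1..n. (of_nat q :: 'a)) = of_nat (q ^ n)" by (simp add: of_nat_power)
      ultimately show ?thesis by simp
    qed
    finally show "rn (n + 1) a * \<chi>0 (a (n + 1)) * (1 / of_nat (q ^ n) * (\<Sum>\<chi>\<in>CH. (\<Prod>i=1..n. U i (\<chi> i) * \<chi> i (a i))))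
        = rn (n + 1) a * \<chi>0 (a (n + 1)) * (\<Prod>i=1..n. (\<zeta> (m * (n - i + 2)) - 1) * \<zeta> (m * (n - i + 2)) ^ nat (a i) / (\<zeta> (m * (n - i + 2)) ^ (p ^ m) - 1))"
      using q0 by simp
  qed
  also have "\<dots> = (\<Sum>a\<in>digits p m (n + 1). Cn n * (\<zeta> (m * (n + 1)) ^ digit_val p m (n + 1) a * rn (n + 1) a))"
  proof (intro sum.cong refl)
    fix a assume a: "a \<in> digits p m (n + 1)"
    have "(\<Prod>i=1..n. (\<zeta> (m * (n - i + 2)) - 1) * \<zeta> (m * (n - i + 2)) ^ nat (a i) / (\<zeta> (m * (n - i + 2)) ^ (p ^ m) - 1))
        = Cn n * (\<Prod>i=1..n. \<zeta> (m * (n - i + 2)) ^ nat (a i))"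
      unfolding Cn_def by (simp add: prod.distrib[symmetric] algebra_simps)
    then show "rn (n + 1) a * \<chi>0 (a (n + 1)) * (\<Prod>i=1..n. (\<zeta> (m * (n - i + 2)) - 1) * \<zeta> (m * (n - i + 2)) ^ nat (a i) / (\<zeta> (m * (n - i + 2)) ^ (p ^ m) - 1))
        = Cn n * (\<zeta> (m * (n + 1)) ^ digit_val p m (n + 1) a * rn (n + 1) a)"
      unfolding zN_dv[OF a] \<chi>0_def by (simp add: algebra_simps)
  qed
  also have "\<dots> = Cn n * Eval (n + 1) (\<zeta> (m * (n + 1)) - 1)"
    unfolding Eval_def by (simp add: sum_distrib_left)
  finally show ?thesis .
qed

end

context setting begin

lemma xk_alt: "1 \<le> k \<Longrightarrow> xk k = 1 / (real p ^ k - real p ^ (k - 1))"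
proof -
  assume k: "1 \<le> k"
  have "real p ^ k = real p * real p ^ (k - 1)" using k by (metis Suc_diff_le diff_Suc_1 power_Suc)
  then have "real p ^ k - real p ^ (k - 1) = (real p - 1) * real p ^ (k - 1)" by (simp add: algebra_simps)
  then show ?thesis unfolding xk_def by simp
qed

lemma v_Cn: "v (Cn n) = ereal (xk (m * (n + 1)) - xk m)"
proof -
  define X where "X j = xk (m * (j + 1))" for j
  have fac: "v ((\<zeta> (m * (n - i + 2)) - 1) / (\<zeta> (m * (n - i + 2)) ^ (p ^ m) - 1)) = ereal (X (n - i + 1) - X (n - i))"
    if i: "i \<in> {1..n}" for i
  proof -
    have e1: "\<zeta> (m * (n - i + 2)) ^ (p ^ m) = \<zeta> (m * (n - i + 1))"
      using z_step[of "m * (n - i + 1)"] by (simp add: algebra_simps)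
    have g1: "1 \<le> m * (n - i + 2)" "1 \<le> m * (n - i + 1)" using m1 by simp_all
    have v1: "v (\<zeta> (m * (n - i + 2)) - 1) = ereal (X (n - i + 1))"
      unfolding X_def using v_z1[OF g1(1)] by (simp add: algebra_simps)
    have v2: "v (\<zeta> (m * (n - i + 2)) ^ (p ^ m) - 1) = ereal (X (n - i))"
      unfolding X_def e1 using v_z1[OF g1(2)] by (simp add: algebra_simps)
    have nz: "\<zeta> (m * (n - i + 2)) ^ (p ^ m) - 1 \<noteq> 0" using v2 by auto
    show ?thesis using v_divide[OF nz] v1 v2 by simp
  qed
  have "v (Cn n) = (\<Sum>i=1..n. v ((\<zeta> (m * (n - i + 2)) - 1) / (\<zeta> (m * (n - i + 2)) ^ (p ^ m) - 1)))"
    unfolding Cn_def by (rule v_prod) simp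
  also have "\<dots> = (\<Sum>i=1..n. ereal (X (n - i + 1) - X (n - i)))" by (intro sum.cong refl) (rule fac)
  also have "\<dots> = ereal (\<Sum>i=1..n. X (n - i + 1) - X (n - i))" by (simp add: sum_ereal)
  also have "(\<Sum>i=1..n. X (n - i + 1) - X (n - i)) = (\<Sum>j<n. X (Suc j) - X j)"
    by (rule sum.reindex_bij_witness[of _ "\<lambda>j. n - j" "\<lambda>i. n - i"]) auto
  also have "\<dots> = X n - X 0" by (rule sum_lessThan_telescope)
  finally show ?thesis unfolding X_def by simp
qed

lemma ff_zero_if: "(\<forall>n. \<forall>a\<in>digits p m n. rn n a = 0) \<Longrightarrow> ff = 0"
proof -
  assume z: "\<forall>n. \<forall>a\<in>digits p m n. rn n a = 0"
  have "RS k M = 0" for k M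
    unfolding RS_def push_Zp_def Let_def using z by simp
  then have "RS k = (\<lambda>n. 0)" for k by (simp add: fun_eq_iff)
  then have "vconv v (RS k) 0" for k using vconv_const[of 0] by simp
  then have "fps_nth ff k = 0" for k using ff_conv vconv_unique by blast
  then show ?thesis by (simp add: fps_ext)
qed

lemma main_zero:
  assumes z: "\<forall>n. \<forall>a\<in>digits p m n. rn n a = 0"
  shows "weier_mu RR \<pi> ff = \<infinity> \<and> (\<forall>n\<ge>1. S_sum p m \<zeta> rn n = 0)"
proof
  show "weier_mu RR \<pi> ff = \<infinity>" using ff_zero_if[OF z] unfolding weier_mu_def by simp
  show "\<forall>n\<ge>1. S_sum p m \<zeta> rn n = 0"
    unfolding S_sum_def Let_def dig_char_int_def using z by simp
qed

lemma main_nonzero: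
  assumes nz: "\<exists>n. \<exists>a\<in>digits p m n. rn n a \<noteq> 0"
  shows "\<exists>mu::nat. weier_mu RR \<pi> ff = enat mu \<and>
               (\<exists>N0. \<forall>n\<ge>N0.
                  v (S_sum p m \<zeta> rn n) =
                    ereal (real mu / real e - 1 / (real p ^ m - real p ^ (m - 1))
                      + (real (weier_lambda RR \<pi> ff) + 1)
                        / (real p ^ (m * (n + 1)) - real p ^ (m * (n + 1) - 1))))"
proof -
  have ffnz: "ff \<noteq> 0" using nz ff_zero_rn by blast
  obtain mu lam where wf: "weierstrass_fact RR \<pi> ff mu lam" using weier_exists[OF ff_R ffnz] by blast
  have wm: "weier_mu RR \<pi> ff = enat mu" and wl: "weier_lambda RR \<pi> ff = lam"
    using weier_vals[OF wf ffnz] by auto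
  have "v (S_sum p m \<zeta> rn n) =
          ereal (real mu / real e - 1 / (real p ^ m - real p ^ (m - 1))
            + (real lam + 1) / (real p ^ (m * (n + 1)) - real p ^ (m * (n + 1) - 1)))"
    if n: "n \<ge> lam * e" for n
  proof -
    define N where "N = m * (n + 1)"
    have N1: "1 \<le> N" unfolding N_def using m1 by simp
    define z where "z = \<zeta> N - 1"
    have z1: "(1 + z) ^ (p ^ (m * (n + 1))) = 1" unfolding z_def N_def[symmetric] using z_pow by simp
    have vz: "v z = ereal (xk N)" unfolding z_def using v_z1[OF N1] .
    have small: "real lam * xk N < 1 / real e"
    proof -
      have ee: "real e > 0" using e_pos by simp
      have "real (lam * e) \<le> real n" using n by (simp only: of_nat_le_iff)
      also have "real n < real p ^ n" using n_lt_ppow[OF p_gt1, of n] by (metis of_nat_less_iff of_nat_power)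
      also have "real p ^ n \<le> real p ^ (N - 1)"
      proof (rule power_increasing)
        have "1 * (n + 1) \<le> m * (n + 1)" using m1 by (rule mult_le_mono1)
        then show "n \<le> N - 1" unfolding N_def by simp
        show "1 \<le> real p" using p_gt1 by simp
      qed
      also have "\<dots> \<le> (real p - 1) * real p ^ (N - 1)" using p_gt1 by simp
      finally have "real lam * real e < (real p - 1) * real p ^ (N - 1)" by simp
      then show ?thesis unfolding xk_def using ee p_gt1 by (simp add: field_simps)
    qed
    have vE: "v (Eval (n + 1) z) = ereal (real mu / real e + real lam * xk N)"
      by (rule E_val[OF wf z1 vz xk_pos small])
    have "v (S_sum p m \<zeta> rn n) = v (Cn n) + v (Eval (n + 1) z)"
      unfolding S_eq z_def N_def by (simp add: v_mult)
    also have "\<dots> = ereal (xk N - xk m + (real mu / real e + real lam * xk N))"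
      unfolding v_Cn vE N_def by simp
    also have "xk N - xk m + (real mu / real e + real lam * xk N)
        = real mu / real e - 1 / (real p ^ m - real p ^ (m - 1))
            + (real lam + 1) / (real p ^ (m * (n + 1)) - real p ^ (m * (n + 1) - 1))"
    proof -
      have e1: "1 / (real p ^ m - real p ^ (m - 1)) = xk m" by (rule xk_alt[OF m1, symmetric])
      have x: "xk N = 1 / (real p ^ N - real p ^ (N - 1))" by (rule xk_alt[OF N1])
      have e2: "(real lam + 1) / (real p ^ N - real p ^ (N - 1)) = (real lam + 1) * xk N"
        unfolding x by simp
      show ?thesis unfolding e1 N_def[symmetric] e2 by (simp add: algebra_simps)
    qed
    finally show ?thesis .
  qed
  then show ?thesis using wm wl by blast
qed

end

theorem proposition3p4:
  fixes p m e :: nat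
    and v :: "'a::field_char_0 \<Rightarrow> ereal"
    and K :: "'a set"
    and \<pi> :: 'a
    and \<zeta> :: "nat \<Rightarrow> 'a"
    and G :: "nat \<Rightarrow> ('g, 'b) monoid_scheme"
    and \<rho> :: "nat \<Rightarrow> 'g \<Rightarrow> int"
    and \<nu> :: "nat set \<Rightarrow> (nat \<Rightarrow> 'g) \<Rightarrow> 'a"
  defines "R \<equiv> int_ring v K"
  defines "\<rho>\<nu> \<equiv> push_dig G \<rho> \<nu>"
  defines "f \<equiv> amice p v (push_Zp p m \<rho>\<nu>)"
  assumes Cp: "Cp_like p v"
    and K: "finite_ext_Qp v K"
    and unif: "uniformizer v K \<pi>"
    and ram: "ram_index v \<pi> e"
    and roots: "compatible_roots p \<zeta>"
    and m: "1 \<le> m"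
    and G: "\<And>n. 1 \<le> n \<Longrightarrow> comm_group (G n) \<and> finite (carrier (G n))"
    and \<rho>: "\<And>n. 1 \<le> n \<Longrightarrow> \<rho> n \<in> hom (G n) (integer_mod_group (p ^ m)) \<and>
                          \<rho> n ` carrier (G n) = carrier (integer_mod_group (p ^ m))"
    and \<nu>: "hor_elem R G \<nu>"
  shows "((\<exists>n. \<exists>a\<in>digits p m n. \<rho>\<nu> n a \<noteq> 0) \<longrightarrow>
            (\<exists>mu::nat. weier_mu R \<pi> f = enat mu \<and>
               (\<exists>N0. \<forall>n\<ge>N0.
                  v (S_sum p m \<zeta> \<rho>\<nu> n) =
                    ereal (real mu / real e - 1 / (real p ^ m - real p ^ (m - 1))
                      + (real (weier_lambda R \<pi> f) + 1)
                        / (real p ^ (m * (n + 1)) - real p ^ (m * (n + 1) - 1))))))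
       \<and> ((\<forall>n. \<forall>a\<in>digits p m n. \<rho>\<nu> n a = 0) \<longrightarrow>
            weier_mu R \<pi> f = \<infinity> \<and> (\<forall>n\<ge>1. S_sum p m \<zeta> \<rho>\<nu> n = 0))"
proof -
  have Cp': "prime p" "valuation v" "v (of_nat p) = 1" "vcomplete v"
    using Cp unfolding Cp_like_def by auto
  interpret vK p v K
    by unfold_locales (use Cp' K in auto)
  have RR_eq: "RR = R" unfolding RR_def R_def ..
  interpret setting p v K \<pi> e \<zeta> m G \<rho> \<nu>
    by unfold_locales (use Cp' K unif ram roots m G \<rho> \<nu> RR_eq in auto)
  have rn_eq: "rn = \<rho>\<nu>" unfolding rn_def \<rho>\<nu>_def ..
  have ff_eq: "ff = f" unfolding ff_def f_def rn_eq ..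
  show ?thesis
    using main_nonzero main_zero unfolding RR_eq rn_eq ff_eq by blast
qed

end
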